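(* Let $k\ge2$ be a fixed integer, and for each $n$ let $p_1=p_1(n),\dots,p_k=p_k(n)$ be positive integers with $p=p_1+\cdots+p_k$ and $p_i/n\to y_i\in(0,1)$ as $n\to\infty$. Let $\mathbf{O}_1,\dots,\mathbf{O}_k$ be i.i.d. Haar distributed random orthogonal matrices on $O(n-1)$, let $\mathbf{P}_i=\mathbf{I}_{p_i}\oplus\mathbf{0}_{n-1-p_i}$, and let $\mathbf{Q}=\sum_{i=1}^k\mathbf{O}_i'\mathbf{P}_i\mathbf{O}_i$. Then $$\mathbb{E}\operatorname{tr}\mathbf{Q}^2=p+\sum_{i\neq j}\frac{p_ip_j}{n-1}$$ and $$\operatorname{Var}(\operatorname{tr}\mathbf{Q}^2)=4\sum_{i\ne j}\frac{p_ip_j(n-1-p_i)(n-1-p_j)}{(n-1)^4}+O\!\left(\frac1n\right),$$ where the sums are over ordered pairs $(i,j)$, $i,j\in\{1,\dots,k\}$, $i\ne j$.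
   Context: $\mathbf{0}_m$ denotes the $m\times m$ zero matrix, so $\mathbf{P}_i$ is the $(n-1)\times(n-1)$ diagonal projection of rank $p_i$. *)

theory Defs
  imports "HOL-Probability.Probability" "HOL-Library.Landau_Symbols"
begin

text \<open>m x m real matrices are encoded as functions nat => nat => real,
  with entries outside the block {..<m} x {..<m} equal to zero.\<close>

definition orthogonal_mat :: "nat \<Rightarrow> (nat \<Rightarrow> nat \<Rightarrow> real) \<Rightarrow> bool" where
  "orthogonal_mat m U \<longleftrightarrow>
     (\<forall>i j. (m \<le> i \<or> m \<le> j) \<longrightarrow> U i j = 0) \<and>
     (\<forall>i<m. \<forall>j<m. (\<Sum>l<m. U l i * U l j) = (if i = j then 1 else 0))"

definition mmult :: "nat \<Rightarrow> (nat \<Rightarrow> nat \<Rightarrow> real) \<Rightarrow> (nat \<Rightarrow> nat \<Rightarrow> real) \<Rightarrow> (nat \<Rightarrow> nat \<Rightarrow> real)" where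
  "mmult m A B = (\<lambda>i j. if i < m \<and> j < m then (\<Sum>l<m. A i l * B l j) else 0)"

text \<open>Haar (probability) measure on the orthogonal group O(m): a probability measure on the
  Borel sets, concentrated on O(m), and invariant under left multiplication by O(m).
  (Such a measure is unique, so this characterises the Haar measure.)\<close>

definition haar_orthogonal :: "nat \<Rightarrow> (nat \<Rightarrow> nat \<Rightarrow> real) measure \<Rightarrow> bool" where
  "haar_orthogonal m \<mu> \<longleftrightarrow>
     prob_space \<mu> \<and> sets \<mu> = sets borel \<and>
     emeasure \<mu> {U. orthogonal_mat m U} = 1 \<and>
     (\<forall>V. orthogonal_mat m V \<longrightarrow> distr \<mu> borel (mmult m V) = \<mu>)"

text \<open>Q = sum_i O_i' P_i O_i with P_i = I_{p_i} (+) 0_{m - p_i}, m = n - 1.\<close>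

definition Qmat :: "nat \<Rightarrow> nat \<Rightarrow> (nat \<Rightarrow> nat) \<Rightarrow> (nat \<Rightarrow> nat \<Rightarrow> nat \<Rightarrow> real) \<Rightarrow> nat \<Rightarrow> nat \<Rightarrow> real" where
  "Qmat k m ps Os = (\<lambda>a b. if a < m \<and> b < m then
      (\<Sum>i<k. \<Sum>l<m. Os i l a * (if l < ps i then 1 else 0) * Os i l b) else 0)"

definition trace_sq :: "nat \<Rightarrow> (nat \<Rightarrow> nat \<Rightarrow> real) \<Rightarrow> real" where
  "trace_sq m Q = (\<Sum>a<m. \<Sum>b<m. Q a b * Q b a)"

end

theory Submission
  imports Defs "Jordan_Normal_Form.Determinant"
begin


lemma ortho_zero: "Defs.orthogonal_mat m U \<Longrightarrow> (m \<le> i \<or> m \<le> j) \<Longrightarrow> U i j = 0"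
  unfolding Defs.orthogonal_mat_def by blast

lemma ortho_cols: "Defs.orthogonal_mat m U \<Longrightarrow> i<m \<Longrightarrow> j<m \<Longrightarrow> (\<Sum>l<m. U l i * U l j) = (if i=j then 1 else 0)"
  by (simp add: Defs.orthogonal_mat_def)

lemma ortho_rows:
  assumes "Defs.orthogonal_mat m U" "i<m" "j<m"
  shows "(\<Sum>l<m. U i l * U j l) = (if i=j then 1 else 0)"
proof -
  define A where "A = mat m m (\<lambda>(i,j). U i j)"
  have A: "A \<in> carrier_mat m m" "transpose_mat A \<in> carrier_mat m m" unfolding A_def by auto
  have "transpose_mat A * A = 1\<^sub>m m"
  proof (rule eq_matI)
    fix i j assume ij: "i < dim_row (1\<^sub>m m)" "j < dim_col (1\<^sub>m m)"
    then have "(transpose_mat A * A) $$ (i,j) = (\<Sum>l<m. U l i * U l j)"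
      unfolding A_def by (auto simp: scalar_prod_def row_def col_def intro!: sum.reindex_bij_witness[of _ id id])
    also have "\<dots> = 1\<^sub>m m $$ (i,j)" using ij ortho_cols[OF assms(1)] by auto
    finally show "(transpose_mat A * A) $$ (i,j) = 1\<^sub>m m $$ (i,j)" .
  qed (use A in auto)
  then have "A * transpose_mat A = 1\<^sub>m m" using mat_mult_left_right_inverse[OF A(2) A(1)] by blast
  then have "(A * transpose_mat A) $$ (i,j) = 1\<^sub>m m $$ (i,j)" by simp
  moreover have "(A * transpose_mat A) $$ (i,j) = (\<Sum>l<m. U i l * U j l)"
    using assms unfolding A_def by (auto simp: scalar_prod_def row_def col_def intro!: sum.reindex_bij_witness[of _ id id])
  ultimately show ?thesis using assms by auto
qed

definition transp :: "nat \<Rightarrow> (nat \<Rightarrow> nat \<Rightarrow> real) \<Rightarrow> (nat \<Rightarrow> nat \<Rightarrow> real)" where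
  "transp m W = (\<lambda>i j. if i < m \<and> j < m then W j i else 0)"

definition Yf :: "nat \<Rightarrow> nat \<Rightarrow> nat \<Rightarrow> (nat \<Rightarrow> nat \<Rightarrow> real) \<Rightarrow> (nat \<Rightarrow> nat \<Rightarrow> real) \<Rightarrow> real" where
  "Yf m p q U W = (\<Sum>l<p. \<Sum>l'<q. (\<Sum>a<m. U l a * W l' a)^2)"

definition gS :: "nat \<Rightarrow> nat \<Rightarrow> (nat \<Rightarrow> nat \<Rightarrow> real) \<Rightarrow> real" where
  "gS p q S = (\<Sum>l<p. \<Sum>l'<q. (S l l')^2)"

lemma ind_sum:
  fixes f :: "nat \<Rightarrow> real"
  assumes "p \<le> m"
  shows "(\<Sum>l<m. f l * (if l < p then 1 else 0) * g l) = (\<Sum>l<p. f l * g l)"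
proof -
  have "(\<Sum>l<m. f l * (if l < p then 1 else 0) * g l) = (\<Sum>l\<in>{..<m} \<inter> {l. l < p}. f l * g l)"
    by (subst sum.inter_restrict) (auto intro!: sum.cong)
  also have "{..<m} \<inter> {l. l < p} = {..<p}" using assms by auto
  finally show ?thesis .
qed

lemma swap_in: "(\<Sum>a\<in>A. \<Sum>b\<in>B. \<Sum>c\<in>C. g a b c) = (\<Sum>c\<in>C. \<Sum>a\<in>A. \<Sum>b\<in>B. g a b c)"
proof -
  have "(\<Sum>a\<in>A. \<Sum>b\<in>B. \<Sum>c\<in>C. g a b c) = (\<Sum>a\<in>A. \<Sum>c\<in>C. \<Sum>b\<in>B. g a b c)"
    by (intro sum.cong refl sum.swap)
  also have "\<dots> = (\<Sum>c\<in>C. \<Sum>a\<in>A. \<Sum>b\<in>B. g a b c)" by (rule sum.swap)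
  finally show ?thesis .
qed

lemma Qmat_eq:
  assumes "\<forall>i<k. ps i \<le> m" "a < m" "b < m"
  shows "Qmat k m ps Os a b = (\<Sum>i<k. \<Sum>l<ps i. Os i l a * Os i l b)"
  using assms by (simp add: Qmat_def ind_sum)

lemma trace_Y:
  assumes "\<forall>i<k. ps i \<le> m"
  shows "trace_sq m (Qmat k m ps Os) = (\<Sum>i<k. \<Sum>j<k. Yf m (ps i) (ps j) (Os i) (Os j))"
proof -
  have "trace_sq m (Qmat k m ps Os) = (\<Sum>a<m. \<Sum>b<m. (\<Sum>i<k. \<Sum>l<ps i. Os i l a * Os i l b) * (\<Sum>j<k. \<Sum>l'<ps j. Os j l' b * Os j l' a))"
    unfolding trace_sq_def using assms by (simp add: Qmat_eq)
  also have "\<dots> = (\<Sum>a<m. \<Sum>b<m. \<Sum>i<k. \<Sum>j<k. \<Sum>l'<ps j. \<Sum>l<ps i. Os i l a * (Os i l b * (Os j l' a * Os j l' b)))"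
    by (simp add: sum_distrib_left sum_distrib_right mult_ac)
  also have "\<dots> = (\<Sum>i<k. \<Sum>j<k. \<Sum>l'<ps j. \<Sum>l<ps i. \<Sum>a<m. \<Sum>b<m. Os i l a * (Os i l b * (Os j l' a * Os j l' b)))"
    apply (subst swap_in, rule sum.cong[OF refl])
    apply (subst swap_in, rule sum.cong[OF refl])
    apply (subst swap_in, rule sum.cong[OF refl])
    apply (subst swap_in, rule refl)
    done
  also have "\<dots> = (\<Sum>i<k. \<Sum>j<k. \<Sum>l<ps i. \<Sum>l'<ps j. \<Sum>a<m. \<Sum>b<m. Os i l a * (Os i l b * (Os j l' a * Os j l' b)))"
    by (intro sum.cong refl sum.swap)
  also have "\<dots> = (\<Sum>i<k. \<Sum>j<k. Yf m (ps i) (ps j) (Os i) (Os j))"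
    unfolding Yf_def by (simp add: power2_eq_square sum_product mult_ac)
  finally show ?thesis .
qed

lemma Y_sym: "Yf m p q U W = Yf m q p W U"
  unfolding Yf_def by (subst sum.swap) (simp add: mult.commute)

lemma Y_diag:
  assumes "Defs.orthogonal_mat m U" "p \<le> m"
  shows "Yf m p p U U = real p"
proof -
  have "Yf m p p U U = (\<Sum>l<p. \<Sum>l'<p. (if l = l' then 1 else 0))"
    unfolding Yf_def using assms by (intro sum.cong refl) (simp add: ortho_rows)
  also have "\<dots> = real p" by simp
  finally show ?thesis .
qed

lemma mmult_assoc: "mmult m A (mmult m B C) = mmult m (mmult m A B) C"
proof (intro ext)
  fix i j
  show "mmult m A (mmult m B C) i j = mmult m (mmult m A B) C i j"
  proof (cases "i < m \<and> j < m")
    case True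
    have "mmult m A (mmult m B C) i j = (\<Sum>l<m. \<Sum>s<m. A i l * (B l s * C s j))"
      using True unfolding mmult_def by (auto simp: sum_distrib_left intro!: sum.cong)
    also have "\<dots> = (\<Sum>s<m. \<Sum>l<m. A i l * B l s * C s j)"
      by (subst sum.swap) (simp add: mult_ac)
    also have "\<dots> = mmult m (mmult m A B) C i j"
      using True unfolding mmult_def by (auto simp: sum_distrib_right intro!: sum.cong)
    finally show ?thesis .
  qed (auto simp: mmult_def)
qed

lemma ortho_mmult:
  assumes A: "Defs.orthogonal_mat m A" and B: "Defs.orthogonal_mat m B"
  shows "Defs.orthogonal_mat m (mmult m A B)"
  unfolding Defs.orthogonal_mat_def
proof (intro conjI allI impI)
  fix i j assume "m \<le> i \<or> m \<le> j" then show "mmult m A B i j = 0" by (auto simp: mmult_def)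
next
  fix i j assume ij: "i < m" "j < m"
  have "(\<Sum>l<m. mmult m A B l i * mmult m A B l j) = (\<Sum>l<m. \<Sum>s<m. \<Sum>t<m. B s i * B t j * (A l s * A l t))"
    using ij unfolding mmult_def by (auto simp: sum_product mult_ac intro!: sum.cong)
  also have "\<dots> = (\<Sum>s<m. \<Sum>t<m. B s i * B t j * (\<Sum>l<m. A l s * A l t))"
    by (subst swap_in[symmetric]) (simp add: sum_distrib_left)
  also have "\<dots> = (\<Sum>s<m. \<Sum>t<m. B s i * B t j * (if s = t then 1 else 0))"
    using A by (intro sum.cong refl) (simp add: ortho_cols)
  also have "\<dots> = (\<Sum>s<m. B s i * B s j)"
    by (simp add: if_distrib cong: if_cong)
  also have "\<dots> = (if i = j then 1 else 0)" using B ij by (simp add: ortho_cols)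
  finally show "(\<Sum>l<m. mmult m A B l i * mmult m A B l j) = (if i = j then 1 else 0)" .
qed

lemma ortho_transp:
  assumes "Defs.orthogonal_mat m W"
  shows "Defs.orthogonal_mat m (transp m W)"
  unfolding Defs.orthogonal_mat_def
proof (intro conjI allI impI)
  fix i j assume "m \<le> i \<or> m \<le> j" then show "transp m W i j = 0" by (auto simp: transp_def)
next
  fix i j assume ij: "i < m" "j < m"
  have "(\<Sum>l<m. transp m W l i * transp m W l j) = (\<Sum>l<m. W i l * W j l)"
    using ij unfolding transp_def by (auto intro!: sum.cong)
  also have "\<dots> = (if i = j then 1 else 0)" using assms ij by (simp add: ortho_rows)
  finally show "(\<Sum>l<m. transp m W l i * transp m W l j) = (if i = j then 1 else 0)" .
qed

lemma ortho_entry_sq: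
  assumes "Defs.orthogonal_mat m U"
  shows "(U i j)^2 \<le> 1"
proof (cases "i < m \<and> j < m")
  case True
  have "(U i j)^2 \<le> (\<Sum>l<m. (U l j)^2)"
    using True by (intro member_le_sum) auto
  also have "\<dots> = 1" using ortho_cols[OF assms, of j j] True by (simp add: power2_eq_square)
  finally show ?thesis .
next
  case False then show ?thesis using ortho_zero[OF assms, of i j] by auto
qed

lemma ortho_entry:
  assumes "Defs.orthogonal_mat m U"
  shows "\<bar>U i j\<bar> \<le> 1"
  using ortho_entry_sq[OF assms, of i j] by (metis abs_le_square_iff abs_one one_power2)

lemma Y_eq_g:
  assumes "p \<le> m" "q \<le> m"
  shows "Yf m p q U W = gS p q (mmult m U (transp m W))"
  unfolding Yf_def gS_def using assms by (intro sum.cong refl) (auto simp: mmult_def transp_def intro!: sum.cong)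

lemma gS_bounds:
  assumes "Defs.orthogonal_mat m S"
  shows "0 \<le> gS p q S" "gS p q S \<le> real p * real q"
proof -
  show "0 \<le> gS p q S" unfolding gS_def by (intro sum_nonneg) auto
  have "gS p q S \<le> (\<Sum>l<p. \<Sum>l'<q. 1)"
    unfolding gS_def by (intro sum_mono ortho_entry_sq[OF assms])
  then show "gS p q S \<le> real p * real q" by simp
qed

lemma Y_bounds:
  assumes "Defs.orthogonal_mat m U" "Defs.orthogonal_mat m W" "p \<le> m" "q \<le> m"
  shows "0 \<le> Yf m p q U W" "Yf m p q U W \<le> real p * real q"
  using gS_bounds[OF ortho_mmult[OF assms(1) ortho_transp[OF assms(2)]]] Y_eq_g[OF assms(3,4)] by auto

section \<open>Measurability\<close>

lemma meas_entry[measurable]: "(\<lambda>U::nat \<Rightarrow> nat \<Rightarrow> real. U a b) \<in> borel_measurable borel"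
proof -
  have "(\<lambda>U::nat \<Rightarrow> nat \<Rightarrow> real. U a) \<in> measurable borel borel" by (rule measurable_product_coordinates)
  moreover have "(\<lambda>x::nat \<Rightarrow> real. x b) \<in> borel_measurable borel" by (rule measurable_product_coordinates)
  ultimately show ?thesis using measurable_comp[of "\<lambda>U::nat \<Rightarrow> nat \<Rightarrow> real. U a" borel borel "\<lambda>x. x b" borel]
    by (simp add: comp_def)
qed

lemma meas_entry'[measurable]:
  assumes [measurable]: "f \<in> measurable N borel"
  shows "(\<lambda>x. (f x :: nat \<Rightarrow> nat \<Rightarrow> real) a b) \<in> borel_measurable N"
  using measurable_comp[OF assms meas_entry] by (simp add: comp_def)

lemma meas_matrix:
  fixes f :: "'b \<Rightarrow> nat \<Rightarrow> nat \<Rightarrow> real"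
  assumes "\<And>a b. (\<lambda>x. f x a b) \<in> borel_measurable N"
  shows "f \<in> measurable N borel"
proof (rule measurable_coordinatewise_then_product)
  fix a show "(\<lambda>x. f x a) \<in> borel_measurable N"
    by (rule measurable_coordinatewise_then_product) (rule assms)
qed

lemma meas_mmult[measurable]: "mmult m V \<in> measurable borel borel"
  by (rule meas_matrix) (simp add: mmult_def)

lemma meas_mmult_r[measurable]: "(\<lambda>U. mmult m U W) \<in> measurable borel borel"
  by (rule meas_matrix) (simp add: mmult_def)

lemma pred_ortho[measurable]: "Measurable.pred borel (Defs.orthogonal_mat m)"
  unfolding Defs.orthogonal_mat_def by measurable

lemma sets_ortho[measurable]: "{U. Defs.orthogonal_mat m U} \<in> sets borel"
  using pred_ortho[of m] by (simp add: pred_def)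

section \<open>Haar measure basics\<close>

lemma haar_prob: "haar_orthogonal m \<mu> \<Longrightarrow> prob_space \<mu>"
  by (simp add: haar_orthogonal_def)

lemma haar_sets: "haar_orthogonal m \<mu> \<Longrightarrow> sets \<mu> = sets borel"
  by (simp add: haar_orthogonal_def)

lemma haar_space: "haar_orthogonal m \<mu> \<Longrightarrow> space \<mu> = UNIV"
  using sets_eq_imp_space_eq[OF haar_sets] by auto

lemma haar_meas:
  assumes "haar_orthogonal m \<mu>" "g \<in> measurable borel N"
  shows "g \<in> measurable \<mu> N"
  using assms measurable_cong_sets[OF haar_sets[OF assms(1)] refl] by blast

lemma haar_AE_ortho:
  assumes "haar_orthogonal m \<mu>"
  shows "AE U in \<mu>. Defs.orthogonal_mat m U"
proof -
  interpret prob_space \<mu> using haar_prob[OF assms] .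
  have "{x \<in> space \<mu>. Defs.orthogonal_mat m x} = {U. Defs.orthogonal_mat m U}"
    using haar_space[OF assms] by auto
  then show ?thesis using assms sets_ortho[of m] haar_sets[OF assms]
    by (intro AE_I_eq_1) (auto simp: haar_orthogonal_def)
qed

lemma haar_inv:
  fixes g :: "(nat \<Rightarrow> nat \<Rightarrow> real) \<Rightarrow> real"
  assumes "haar_orthogonal m \<mu>" "Defs.orthogonal_mat m V" "g \<in> borel_measurable borel"
  shows "(\<integral>U. g (mmult m V U) \<partial>\<mu>) = (\<integral>U. g U \<partial>\<mu>)"
proof -
  have "(\<integral>U. g (mmult m V U) \<partial>\<mu>) = integral\<^sup>L (distr \<mu> borel (mmult m V)) g"
    using integral_distr[OF haar_meas[OF assms(1) meas_mmult] assms(3)] by simp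
  also have "distr \<mu> borel (mmult m V) = \<mu>" using assms by (simp add: haar_orthogonal_def)
  finally show ?thesis .
qed

lemma haar_integrable:
  fixes g :: "(nat \<Rightarrow> nat \<Rightarrow> real) \<Rightarrow> real"
  assumes "haar_orthogonal m \<mu>" "g \<in> borel_measurable borel"
    "\<And>U. Defs.orthogonal_mat m U \<Longrightarrow> \<bar>g U\<bar> \<le> B"
  shows "integrable \<mu> g"
proof -
  interpret prob_space \<mu> using haar_prob[OF assms(1)] .
  show ?thesis
    by (rule integrable_const_bound[where B=B])
       (use haar_AE_ortho[OF assms(1)] assms(3) in \<open>auto elim!: eventually_mono intro: haar_meas[OF assms(1) assms(2)]\<close>)
qed

section \<open>Two-row block matrices\<close>

definition blk :: "nat \<Rightarrow> nat \<Rightarrow> nat \<Rightarrow> real \<Rightarrow> real \<Rightarrow> real \<Rightarrow> real \<Rightarrow> nat \<Rightarrow> nat \<Rightarrow> real" where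
  "blk m a c \<alpha> \<beta> \<gamma> \<delta> = (\<lambda>l i. if l < m \<and> i < m then
     (if i = a then (if l = a then \<alpha> else if l = c then \<gamma> else 0)
      else if i = c then (if l = a then \<beta> else if l = c then \<delta> else 0)
      else (if l = i then 1 else 0)) else 0)"

lemma sum_split2:
  fixes f :: "nat \<Rightarrow> real"
  assumes "a < m" "c < m" "a \<noteq> c"
  shows "(\<Sum>l<m. f l) = f a + f c + (\<Sum>l\<in>{..<m} - {a, c}. f l)"
proof -
  have "{..<m} = insert a (insert c ({..<m} - {a, c}))" using assms by auto
  then have "(\<Sum>l<m. f l) = (\<Sum>l\<in>insert a (insert c ({..<m} - {a, c})). f l)" by simp
  also have "\<dots> = f a + f c + (\<Sum>l\<in>{..<m} - {a, c}. f l)"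
    using assms by (simp add: sum.insert)
  finally show ?thesis .
qed

lemma blk_mult:
  assumes "a < m" "c < m" "a \<noteq> c" "r < m" "j < m"
  shows "mmult m (blk m a c \<alpha> \<beta> \<gamma> \<delta>) U r j =
    (if r = a then \<alpha> * U a j + \<beta> * U c j else if r = c then \<gamma> * U a j + \<delta> * U c j else U r j)"
proof -
  have "mmult m (blk m a c \<alpha> \<beta> \<gamma> \<delta>) U r j = (\<Sum>i<m. blk m a c \<alpha> \<beta> \<gamma> \<delta> r i * U i j)"
    using assms by (simp add: mmult_def)
  also have "\<dots> = blk m a c \<alpha> \<beta> \<gamma> \<delta> r a * U a j + blk m a c \<alpha> \<beta> \<gamma> \<delta> r c * U c j
      + (\<Sum>i\<in>{..<m} - {a, c}. blk m a c \<alpha> \<beta> \<gamma> \<delta> r i * U i j)"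
    by (rule sum_split2[OF assms(1-3)])
  also have "(\<Sum>i\<in>{..<m} - {a, c}. blk m a c \<alpha> \<beta> \<gamma> \<delta> r i * U i j) = (\<Sum>i\<in>{..<m} - {a, c}. (if r = i then U i j else 0))"
    by (rule sum.cong) (use assms in \<open>auto simp: blk_def\<close>)
  also have "(\<Sum>i\<in>{..<m} - {a, c}. (if r = i then U i j else 0)) = (if r \<noteq> a \<and> r \<noteq> c then U r j else 0)"
    using assms by (simp add: sum.delta)
  finally show ?thesis using assms by (auto simp: blk_def)
qed

lemma blk_ortho:
  assumes "a < m" "c < m" "a \<noteq> c"
    and "\<alpha>^2 + \<gamma>^2 = 1" "\<beta>^2 + \<delta>^2 = 1" "\<alpha> * \<beta> + \<gamma> * \<delta> = 0"
  shows "Defs.orthogonal_mat m (blk m a c \<alpha> \<beta> \<gamma> \<delta>)"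
  unfolding Defs.orthogonal_mat_def
proof (intro conjI allI impI)
  fix i j assume "m \<le> i \<or> m \<le> j" then show "blk m a c \<alpha> \<beta> \<gamma> \<delta> i j = 0" by (auto simp: blk_def)
next
  fix i j assume ij: "i < m" "j < m"
  let ?V = "blk m a c \<alpha> \<beta> \<gamma> \<delta>"
  have "(\<Sum>l<m. ?V l i * ?V l j) = ?V a i * ?V a j + ?V c i * ?V c j + (\<Sum>l\<in>{..<m} - {a, c}. ?V l i * ?V l j)"
    by (rule sum_split2[OF assms(1-3)])
  also have "(\<Sum>l\<in>{..<m} - {a, c}. ?V l i * ?V l j) = (\<Sum>l\<in>{..<m} - {a, c}. (if l = i then (if l = j then 1 else 0) else 0))"
    by (rule sum.cong) (use ij in \<open>auto simp: blk_def\<close>)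
  also have "(\<Sum>l\<in>{..<m} - {a, c}. (if l = i then (if l = j then 1 else 0) else 0)) = (if i = j \<and> i \<noteq> a \<and> i \<noteq> c then 1 else (0::real))"
    using ij by (simp add: sum.delta')
  finally show "(\<Sum>l<m. ?V l i * ?V l j) = (if i = j then 1 else 0)"
    using assms ij by (auto simp: blk_def power2_eq_square algebra_simps)
qed

definition tr :: "nat \<Rightarrow> nat \<Rightarrow> nat \<Rightarrow> nat" where
  "tr r s i = (if i = r then s else if i = s then r else i)"

lemma tr_lt: "r < m \<Longrightarrow> s < m \<Longrightarrow> i < m \<Longrightarrow> tr r s i < m"
  by (simp add: tr_def)

lemma swap_mat:
  assumes "r < m" "s < m" "r \<noteq> s"
  shows "mmult m (blk m r s 0 1 1 0) U = (\<lambda>i j. if i < m \<and> j < m then U (tr r s i) j else 0)"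
proof (intro ext)
  fix i j show "mmult m (blk m r s 0 1 1 0) U i j = (if i < m \<and> j < m then U (tr r s i) j else 0)"
    using blk_mult[OF assms, of i j 0 1 1 0 U] by (auto simp: tr_def mmult_def)
qed

lemma pair_inv:
  assumes F: "\<And>r s a c. r < m \<Longrightarrow> s < m \<Longrightarrow> a < m \<Longrightarrow> c < m \<Longrightarrow> F (tr r s a) (tr r s c) = F a c"
    and lt: "a < m" "c < m" "a' < m" "c' < m" and ne: "a \<noteq> c" "a' \<noteq> c'"
  shows "F a c = F a' c'"
proof (cases "c' = a")
  case False
  have "F a c = F (tr c c' a) (tr c c' c)" using F[of c c' a c] lt by simp
  also have "\<dots> = F a c'" using False ne by (simp add: tr_def)
  also have "\<dots> = F (tr a a' a) (tr a a' c')" using F[of a a' a c'] lt by simp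
  also have "\<dots> = F a' c'" using False ne by (simp add: tr_def)
  finally show ?thesis .
next
  case True
  show ?thesis
  proof (cases "c = a'")
    case False
    have "F a c = F (tr a a' a) (tr a a' c)" using F[of a a' a c] lt by simp
    also have "\<dots> = F a' c" using False ne by (simp add: tr_def)
    also have "\<dots> = F (tr c a a') (tr c a c)" using F[of c a a' c] lt by simp
    also have "\<dots> = F a' c'" using False ne True by (auto simp: tr_def)
    finally show ?thesis .
  next
    case c: True
    have "F a c = F (tr a c a) (tr a c c)" using F[of a c a c] lt by simp
    also have "\<dots> = F a' c'" using c True ne by (auto simp: tr_def)
    finally show ?thesis .
  qed
qed

lemma integral_lin5:
  fixes f1 f2 f3 f4 f5 :: "_ \<Rightarrow> real"
  assumes "integrable M f1" "integrable M f2" "integrable M f3" "integrable M f4" "integrable M f5"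
  shows "(\<integral>x. f1 x + f2 x + f3 x + f4 x + c * f5 x \<partial>M) =
    (\<integral>x. f1 x \<partial>M) + (\<integral>x. f2 x \<partial>M) + (\<integral>x. f3 x \<partial>M) + (\<integral>x. f4 x \<partial>M) + c * (\<integral>x. f5 x \<partial>M)"
  using assms by (simp add: integral_add)

lemma givens_id: "((s::real) * x + s * y) * (s * x + s * y) * (s * z + s * w) * (s * z + s * w) +
     (s * x + - s * y) * (s * x + - s * y) * (s * z + - s * w) * (s * z + - s * w) =
     s * s * (s * s) * (2 * (x*x*z*z + x*x*w*w + y*y*z*z + y*y*w*w) + 8 * (x*z*y*w))"
  by (simp add: algebra_simps)

locale haarM =
  fixes m :: nat and \<mu> :: "(nat \<Rightarrow> nat \<Rightarrow> real) measure"
  assumes haar: "haar_orthogonal m \<mu>"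
begin

sublocale prob_space \<mu> using haar_prob[OF haar] .

lemma sets_mu[measurable_cong]: "sets \<mu> = sets borel"
  by (rule haar_sets[OF haar])

lemma meas_perm[measurable]: "(\<lambda>U::nat \<Rightarrow> nat \<Rightarrow> real. (\<lambda>i j. if i < m \<and> j < m then U (tr r s i) j else 0)) \<in> measurable borel borel"
  by (rule meas_matrix) simp

lemma AE_ortho: "AE U in \<mu>. Defs.orthogonal_mat m U"
  by (rule haar_AE_ortho[OF haar])

lemma abs_le1: "Defs.orthogonal_mat m U \<Longrightarrow> \<bar>U a b\<bar> \<le> 1"
  by (rule ortho_entry)

lemma int2[simp, intro]: "integrable \<mu> (\<lambda>U. U a b * U c d)"
proof (rule haar_integrable[OF haar, where B=1])
  fix U assume U: "Defs.orthogonal_mat m U"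
  show "\<bar>U a b * U c d\<bar> \<le> 1" unfolding abs_mult
    using abs_le1[OF U, of a b] abs_le1[OF U, of c d] by (intro mult_le_one) auto
qed simp

lemma int4[simp, intro]: "integrable \<mu> (\<lambda>U. U a b * U c d * U e f * U g h)"
proof (rule haar_integrable[OF haar, where B=1])
  fix U assume U: "Defs.orthogonal_mat m U"
  show "\<bar>U a b * U c d * U e f * U g h\<bar> \<le> 1" unfolding abs_mult
    using abs_le1[OF U, of a b] abs_le1[OF U, of c d] abs_le1[OF U, of e f] abs_le1[OF U, of g h]
    by (intro mult_le_one) auto
qed simp

lemma inv:
  fixes g :: "(nat \<Rightarrow> nat \<Rightarrow> real) \<Rightarrow> real"
  assumes "Defs.orthogonal_mat m V" "g \<in> borel_measurable borel"
  shows "(\<integral>U. g (mmult m V U) \<partial>\<mu>) = (\<integral>U. g U \<partial>\<mu>)"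
  by (rule haar_inv[OF haar assms])

lemma swap_inv:
  fixes g :: "(nat \<Rightarrow> nat \<Rightarrow> real) \<Rightarrow> real"
  assumes "r < m" "s < m" "g \<in> borel_measurable borel"
  shows "(\<integral>U. g (\<lambda>i j. if i < m \<and> j < m then U (tr r s i) j else 0) \<partial>\<mu>) = (\<integral>U. g U \<partial>\<mu>)"
proof (cases "r = s")
  case True
  have "(\<lambda>i j. if i < m \<and> j < m then U (tr r s i) j else 0) = U" if "Defs.orthogonal_mat m U" for U
    using True ortho_zero[OF that] by (auto simp: tr_def fun_eq_iff)
  then show ?thesis using AE_ortho assms(3) by (intro integral_cong_AE) (auto elim!: eventually_mono)
next
  case False
  have o: "Defs.orthogonal_mat m (blk m r s 0 1 1 0)" using assms False by (intro blk_ortho) auto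
  show ?thesis using inv[OF o assms(3)] swap_mat[OF assms(1,2) False] by simp
qed

lemma e2_swap:
  assumes "a < m" "c < m" "b < m"
  shows "(\<integral>U. (U c b)^2 \<partial>\<mu>) = (\<integral>U. (U a b)^2 \<partial>\<mu>)"
  using swap_inv[OF assms(1,2), of "\<lambda>U. (U a b)^2"] assms by (simp add: tr_def)

lemma e2:
  assumes "a < m" "b < m"
  shows "(\<integral>U. (U a b)^2 \<partial>\<mu>) = 1 / real m"
proof -
  have "(\<integral>U. (\<Sum>c<m. (U c b)^2) \<partial>\<mu>) = (\<integral>U. 1 \<partial>\<mu>)"
    using AE_ortho assms by (intro integral_cong_AE) (auto elim!: eventually_mono simp: ortho_cols power2_eq_square)
  also have "\<dots> = 1" by (simp add: prob_space)
  finally have "1 = (\<Sum>c<m. (\<integral>U. (U c b)^2 \<partial>\<mu>))" by (simp add: power2_eq_square)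
  also have "\<dots> = (\<Sum>c<m. (\<integral>U. (U a b)^2 \<partial>\<mu>))" using assms by (intro sum.cong refl e2_swap) auto
  finally show ?thesis using assms by (simp add: field_simps)
qed

definition M4 where "M4 a b c d = (\<integral>U. U a b * U a b * U c d * U c d \<partial>\<mu>)"
definition G4 where "G4 a c b d = (\<integral>U. U a b * U a d * U c b * U c d \<partial>\<mu>)"

lemma M4_swap:
  assumes "r < m" "s < m" "a < m" "b < m" "c < m" "d < m"
  shows "M4 (tr r s a) b (tr r s c) d = M4 a b c d"
  using swap_inv[OF assms(1,2), of "\<lambda>U. U a b * U a b * U c d * U c d"] assms
  unfolding M4_def by simp

lemma G4_swap:
  assumes "r < m" "s < m" "a < m" "b < m" "c < m" "d < m"
  shows "G4 (tr r s a) (tr r s c) b d = G4 a c b d"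
  using swap_inv[OF assms(1,2), of "\<lambda>U. U a b * U a d * U c b * U c d"] assms
  unfolding G4_def by simp

lemma M4_diag_inv:
  assumes "a < m" "a' < m" "b < m" "d < m"
  shows "M4 a b a d = M4 a' b a' d"
  using M4_swap[of a a' a b a d] assms by (simp add: tr_def)

lemma M4_off_inv:
  assumes "a < m" "c < m" "a' < m" "c' < m" "a \<noteq> c" "a' \<noteq> c'" "b < m" "d < m"
  shows "M4 a b c d = M4 a' b c' d"
  using pair_inv[where F="\<lambda>a c. M4 a b c d", OF _ assms(1-6)] M4_swap assms by blast

lemma G4_off_inv:
  assumes "a < m" "c < m" "a' < m" "c' < m" "a \<noteq> c" "a' \<noteq> c'" "b < m" "d < m"
  shows "G4 a c b d = G4 a' c' b d"
  using pair_inv[where F="\<lambda>a c. G4 a c b d", OF _ assms(1-6)] G4_swap assms by blast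

lemma E1:
  assumes "a < m" "b < m" "d < m"
  shows "(\<Sum>c<m. M4 a b c d) = 1 / real m"
proof -
  have "(\<Sum>c<m. M4 a b c d) = (\<integral>U. (\<Sum>c<m. U a b * U a b * U c d * U c d) \<partial>\<mu>)"
    unfolding M4_def by (subst Bochner_Integration.integral_sum) auto
  also have "\<dots> = (\<integral>U. (U a b)^2 \<partial>\<mu>)"
  proof (intro integral_cong_AE)
    show "AE U in \<mu>. (\<Sum>c<m. U a b * U a b * U c d * U c d) = (U a b)^2"
      using AE_ortho
    proof eventually_elim
      case (elim U)
      have "(\<Sum>c<m. U a b * U a b * U c d * U c d) = U a b * U a b * (\<Sum>c<m. U c d * U c d)"
        by (simp add: sum_distrib_left mult_ac)
      also have "\<dots> = (U a b)^2" using elim assms by (simp add: ortho_cols power2_eq_square)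
      finally show ?case .
    qed
  qed simp_all
  also have "\<dots> = 1 / real m" using e2 assms by simp
  finally show ?thesis .
qed

lemma E2:
  assumes "a < m" "b < m" "d < m" "b \<noteq> d"
  shows "(\<Sum>c<m. G4 a c b d) = 0"
proof -
  have "(\<Sum>c<m. G4 a c b d) = (\<integral>U. (\<Sum>c<m. U a b * U a d * U c b * U c d) \<partial>\<mu>)"
    unfolding G4_def by (subst Bochner_Integration.integral_sum) auto
  also have "\<dots> = (\<integral>U. 0 \<partial>\<mu>)"
  proof (intro integral_cong_AE)
    show "AE U in \<mu>. (\<Sum>c<m. U a b * U a d * U c b * U c d) = 0"
      using AE_ortho
    proof eventually_elim
      case (elim U)
      have "(\<Sum>c<m. U a b * U a d * U c b * U c d) = U a b * U a d * (\<Sum>c<m. U c b * U c d)"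
        by (simp add: sum_distrib_left mult_ac)
      also have "\<dots> = 0" using elim assms by (simp add: ortho_cols)
      finally show ?case .
    qed
  qed simp_all
  also have "\<dots> = 0" by simp
  finally show ?thesis .
qed

lemma inv_integrable:
  fixes g :: "(nat \<Rightarrow> nat \<Rightarrow> real) \<Rightarrow> real"
  assumes "Defs.orthogonal_mat m V" "g \<in> borel_measurable borel" "integrable \<mu> g"
  shows "integrable \<mu> (\<lambda>U. g (mmult m V U))"
proof -
  have "integrable (distr \<mu> borel (mmult m V)) g" using assms haar by (simp add: haar_orthogonal_def)
  then show ?thesis using integrable_distr_eq[OF haar_meas[OF haar meas_mmult] assms(2)] by simp
qed

lemma givens:
  assumes "a < m" "c < m" "a \<noteq> c" "b < m" "d < m"
  shows "4 * M4 a b a d = M4 a b a d + M4 a b c d + M4 c b a d + M4 c b c d + 4 * G4 a c b d"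
proof -
  define s where "s = sqrt (1/2)"
  have ss: "s * s = 1/2" unfolding s_def by (simp add: real_sqrt_mult[symmetric])
  have ss2: "s^2 = 1/2" using ss by (simp add: power2_eq_square)
  let ?g = "\<lambda>U::nat \<Rightarrow> nat \<Rightarrow> real. U a b * U a b * U a d * U a d"
  have gm: "?g \<in> borel_measurable borel" by simp
  have o1: "Defs.orthogonal_mat m (blk m a c s s (-s) s)" using assms ss2 by (intro blk_ortho) auto
  have o2: "Defs.orthogonal_mat m (blk m a c s (-s) s s)" using assms ss2 by (intro blk_ortho) auto
  define f1 where "f1 = (\<lambda>U::nat \<Rightarrow> nat \<Rightarrow> real. (s * U a b + s * U c b) * (s * U a b + s * U c b) * (s * U a d + s * U c d) * (s * U a d + s * U c d))"
  define f2 where "f2 = (\<lambda>U::nat \<Rightarrow> nat \<Rightarrow> real. (s * U a b + - s * U c b) * (s * U a b + - s * U c b) * (s * U a d + - s * U c d) * (s * U a d + - s * U c d))"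
  have e1: "(\<lambda>U. ?g (mmult m (blk m a c s s (-s) s) U)) = f1"
    unfolding f1_def using assms by (simp add: blk_mult)
  have e2: "(\<lambda>U. ?g (mmult m (blk m a c s (-s) s s) U)) = f2"
    unfolding f2_def using assms by (simp add: blk_mult)
  have i1: "integrable \<mu> f1" using inv_integrable[OF o1 gm] e1 by simp
  have i2: "integrable \<mu> f2" using inv_integrable[OF o2 gm] e2 by simp
  have h1: "(\<integral>U. f1 U \<partial>\<mu>) = M4 a b a d" using inv[OF o1 gm] e1 unfolding M4_def by simp
  have h2: "(\<integral>U. f2 U \<partial>\<mu>) = M4 a b a d" using inv[OF o2 gm] e2 unfolding M4_def by simp
  have pw: "f1 U + f2 U = (1/2) * (U a b * U a b * U a d * U a d + U a b * U a b * U c d * U c d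
      + U c b * U c b * U a d * U a d + U c b * U c b * U c d * U c d + 4 * (U a b * U a d * U c b * U c d))" for U
  proof -
    have "f1 U + f2 U = (s * s) * (s * s) * (2 * (U a b * U a b * U a d * U a d + U a b * U a b * U c d * U c d
      + U c b * U c b * U a d * U a d + U c b * U c b * U c d * U c d) + 8 * (U a b * U a d * U c b * U c d))"
      unfolding f1_def f2_def by (rule givens_id)
    then show ?thesis unfolding ss by simp
  qed
  have "2 * M4 a b a d = (\<integral>U. f1 U + f2 U \<partial>\<mu>)" using h1 h2 i1 i2 by simp
  also have "\<dots> = (\<integral>U. (1/2) * (U a b * U a b * U a d * U a d + U a b * U a b * U c d * U c d
      + U c b * U c b * U a d * U a d + U c b * U c b * U c d * U c d + 4 * (U a b * U a d * U c b * U c d)) \<partial>\<mu>)"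
    by (simp add: pw)
  also have "\<dots> = (1/2) * (M4 a b a d + M4 a b c d + M4 c b a d + M4 c b c d + 4 * G4 a c b d)"
    unfolding M4_def G4_def by (subst integral_mult_right_zero, subst integral_lin5) auto
  finally show ?thesis by simp
qed

end




lemma sum_rest_const:
  fixes f :: "nat \<Rightarrow> real"
  assumes "a < m" "\<And>c. c < m \<Longrightarrow> c \<noteq> a \<Longrightarrow> f c = K"
  shows "(\<Sum>c<m. f c) = f a + (real m - 1) * K"
proof -
  have "(\<Sum>c<m. f c) = f a + (\<Sum>c\<in>{..<m} - {a}. f c)"
    using assms(1) by (simp add: sum.remove)
  also have "(\<Sum>c\<in>{..<m} - {a}. f c) = (\<Sum>c\<in>{..<m} - {a}. K)"
    using assms(2) by (intro sum.cong) auto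
  also have "\<dots> = (real m - 1) * K" using assms(1) by (simp add: of_nat_diff)
  finally show ?thesis .
qed

definition mom :: "nat \<Rightarrow> bool \<Rightarrow> bool \<Rightarrow> real" where
  "mom m r c = (if r then (if c then 3 / (real m * (real m + 2)) else 1 / (real m * (real m + 2)))
     else (if c then 1 / (real m * (real m + 2)) else (real m + 1) / ((real m - 1) * real m * (real m + 2))))"

context haarM
begin

lemma moments:
  assumes m2: "2 \<le> m" and lt: "a < m" "c < m" "b < m" "d < m"
  shows "M4 a b c d = mom m (a = c) (b = d)"
proof -
  define A where "A = M4 0 b 0 d"
  define B where "B = M4 0 b 1 d"
  define Gv where "Gv = G4 0 1 b d"
  have m0: "0 < m" "1 < m" using m2 by auto
  have diag: "M4 x b x d = A" if "x < m" for x
    unfolding A_def using M4_diag_inv[OF that m0(1) lt(3,4)] .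
  have off: "M4 x b y d = B" if "x < m" "y < m" "x \<noteq> y" for x y
    unfolding B_def using M4_off_inv[OF that(1,2) m0 that(3) _ lt(3,4)] by simp
  have offG: "G4 x y b d = Gv" if "x < m" "y < m" "x \<noteq> y" for x y
    unfolding Gv_def using G4_off_inv[OF that(1,2) m0 that(3) _ lt(3,4)] by simp
  have e1: "A + (real m - 1) * B = 1 / real m"
    using E1[OF m0(1) lt(3,4)] sum_rest_const[OF m0(1), of "\<lambda>c. M4 0 b c d" B] diag[OF m0(1)] off[OF m0(1)]
    by auto
  have gv: "4 * A = A + B + B + A + 4 * Gv"
    using givens[OF m0 _ lt(3,4)] diag[OF m0(1)] diag[OF m0(2)] off[OF m0(1) m0(2)] off[OF m0(2) m0(1)]
    unfolding Gv_def by simp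
  have mr: "real m \<ge> 2" using m2 by simp
  have vals: "A = mom m True (b = d) \<and> B = mom m False (b = d)"
  proof (cases "b = d")
    case True
    have "Gv = B" unfolding Gv_def B_def G4_def M4_def using True by (simp add: mult_ac)
    then have "A = 3 * B" using gv by simp
    then have "B * (real m + 2) = 1 / real m" using e1 by (simp add: algebra_simps)
    then have "B * (real m * (real m + 2)) = 1" using mr by (simp add: field_simps)
    then have B: "B = 1 / (real m * (real m + 2))" using mr by (simp add: eq_divide_eq)
    then show ?thesis using True \<open>A = 3 * B\<close> by (simp add: mom_def)
  next
    case False
    have "G4 0 0 b d = A" unfolding A_def G4_def M4_def by (simp add: mult_ac)
    then have e2: "A + (real m - 1) * Gv = 0"
      using E2[OF m0(1) lt(3,4) False] sum_rest_const[OF m0(1), of "\<lambda>c. G4 0 c b d" Gv] offG[OF m0(1)]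
      by auto
    have Gv: "Gv = - A / (real m - 1)" using e2 mr by (simp add: field_simps)
    have Bv: "B = A * (real m + 1) / (real m - 1)" using gv Gv mr by (simp add: field_simps)
    have "(real m - 1) * B = A * (real m + 1)" using Bv mr by (simp add: field_simps)
    then have "A + A * (real m + 1) = 1 / real m" using e1 by simp
    then have "(A + A * (real m + 1)) * real m = 1" using mr by (simp add: field_simps)
    then have "A * (real m * (real m + 2)) = 1" by (simp add: algebra_simps)
    then have Av: "A = 1 / (real m * (real m + 2))" using mr by (simp add: eq_divide_eq)
    then show ?thesis using False Bv mr by (simp add: mom_def field_simps)
  qed
  show ?thesis
  proof (cases "a = c")
    case True then show ?thesis using diag[OF lt(1)] vals by simp
  next
    case False then show ?thesis using off[OF lt(1,2) False] vals by simp
  qed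
qed
end

lemma dsum_if:
  fixes A B :: real
  shows "(\<Sum>x<n. \<Sum>y<n. (if x = y then A else B)) = real n * A + real n * (real n - 1) * B"
proof -
  have "(\<Sum>x<n. \<Sum>y<n. (if x = y then A else B)) = (\<Sum>x<n. A + (real n - 1) * B)"
  proof (rule sum.cong[OF refl])
    fix x assume "x \<in> {..<n}"
    then show "(\<Sum>y<n. (if x = y then A else B)) = A + (real n - 1) * B"
      using sum_rest_const[of x n "\<lambda>y. if x = y then A else B" B] by auto
  qed
  also have "\<dots> = real n * A + real n * (real n - 1) * B" by (simp add: algebra_simps)
  finally show ?thesis .
qed

lemma haar_right:
  assumes h: "haar_orthogonal m \<mu>" and W: "Defs.orthogonal_mat m W"
  shows "haar_orthogonal m (distr \<mu> borel (\<lambda>U. mmult m U W))"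
proof -
  interpret prob_space \<mu> using haar_prob[OF h] .
  have mW: "(\<lambda>U. mmult m U W) \<in> measurable \<mu> borel" by (rule haar_meas[OF h meas_mmult_r])
  let ?\<nu> = "distr \<mu> borel (\<lambda>U. mmult m U W)"
  interpret nu: prob_space ?\<nu> by (rule prob_space_distr[OF mW])
  have "AE U in ?\<nu>. Defs.orthogonal_mat m U"
    by (subst AE_distr_iff[OF mW]) (use haar_AE_ortho[OF h] W in \<open>auto elim!: eventually_mono intro: ortho_mmult\<close>)
  then have e: "emeasure ?\<nu> {U. Defs.orthogonal_mat m U} = 1"
    using nu.AE_iff_emeasure_eq_1[of "Defs.orthogonal_mat m"] by simp
  have inv: "distr ?\<nu> borel (mmult m V) = ?\<nu>" if V: "Defs.orthogonal_mat m V" for V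
  proof -
    have "distr ?\<nu> borel (mmult m V) = distr \<mu> borel (mmult m V \<circ> (\<lambda>U. mmult m U W))"
      by (rule distr_distr[OF meas_mmult mW])
    also have "mmult m V \<circ> (\<lambda>U. mmult m U W) = (\<lambda>U. mmult m U W) \<circ> mmult m V"
      by (auto simp: mmult_assoc)
    also have "distr \<mu> borel \<dots> = distr (distr \<mu> borel (mmult m V)) borel (\<lambda>U. mmult m U W)"
      by (rule distr_distr[symmetric, OF meas_mmult_r haar_meas[OF h meas_mmult]])
    also have "distr \<mu> borel (mmult m V) = \<mu>" using h V by (simp add: haar_orthogonal_def)
    finally show ?thesis .
  qed
  show ?thesis unfolding haar_orthogonal_def using e inv nu.prob_space_axioms by simp
qed

definition vY :: "nat \<Rightarrow> nat \<Rightarrow> nat \<Rightarrow> real" where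
  "vY m p q = 2 * real p * real q * (real m - real p) * (real m - real q) / ((real m)^2 * (real m - 1) * (real m + 2))"

lemma dsum_mom: "(\<Sum>x<n. \<Sum>y<n. mom m r (x = y)) = real n * mom m r True + real n * (real n - 1) * mom m r False"
proof -
  have "(\<Sum>x<n. \<Sum>y<n. mom m r (x = y)) = (\<Sum>x<n. \<Sum>y<n. (if x = y then mom m r True else mom m r False))"
    by (intro sum.cong refl) auto
  then show ?thesis by (simp add: dsum_if)
qed

lemma mom_poly:
  assumes "2 \<le> m"
  shows "real p * (real q * mom m True True + real q * (real q - 1) * mom m True False)
    + real p * (real p - 1) * (real q * mom m False True + real q * (real q - 1) * mom m False False)
    = (real p * real q / real m)^2 + vY m p q"
proof -
  define x where "x = real m"
  define P where "P = real p"
  define Q where "Q = real q"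
  have mr: "x \<ge> 2" using assms unfolding x_def by simp
  define H where "H = 1 / (x^2 * (x - 1) * (x + 2))"
  have d: "x - 1 \<noteq> 0" "x \<noteq> 0" "x + 2 \<noteq> 0" using mr by auto
  have D: "x^2 * (x - 1) * (x + 2) \<noteq> 0" using d by simp
  have d2: "x * (x + 2) \<noteq> 0" "(x - 1) * x * (x + 2) \<noteq> 0" "x^2 \<noteq> 0" using d by auto
  have F: "1 / (x * (x + 2)) = x * (x - 1) * H"
  proof -
    have "1 / (x * (x + 2)) = x * (x - 1) / (x^2 * (x - 1) * (x + 2))"
      by (subst frac_eq_eq[OF d2(1) D]) (simp add: algebra_simps power2_eq_square)
    then show ?thesis unfolding H_def by (simp only: times_divide_eq_right mult_1_right)
  qed
  have F3: "3 / (x * (x + 2)) = 3 * (x * (x - 1) * H)"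
  proof -
    have "3 / (x * (x + 2)) = 3 * (1 / (x * (x + 2)))" by simp
    then show ?thesis using F by simp
  qed
  have G: "(x + 1) / ((x - 1) * x * (x + 2)) = x * (x + 1) * H"
  proof -
    have "(x + 1) / ((x - 1) * x * (x + 2)) = x * (x + 1) / (x^2 * (x - 1) * (x + 2))"
      by (subst frac_eq_eq[OF d2(2) D]) (simp add: algebra_simps power2_eq_square)
    then show ?thesis unfolding H_def by (simp only: times_divide_eq_right mult_1_right)
  qed
  have S: "(P * Q / x)^2 = P * P * Q * Q * ((x - 1) * (x + 2) * H)"
  proof -
    have "(P * Q / x)^2 = (P * P * Q * Q * ((x - 1) * (x + 2))) / (x^2 * (x - 1) * (x + 2))"
      unfolding power_divide by (subst frac_eq_eq[OF d2(3) D]) (simp add: algebra_simps power2_eq_square)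
    then show ?thesis unfolding H_def by (simp only: times_divide_eq_right mult_1_right)
  qed
  have V: "vY m p q = 2 * P * Q * (x - P) * (x - Q) * H" unfolding vY_def H_def x_def P_def Q_def by simp
  have "P * (Q * (3 * (x * (x - 1) * H)) + Q * (Q - 1) * (x * (x - 1) * H))
      + P * (P - 1) * (Q * (x * (x - 1) * H) + Q * (Q - 1) * (x * (x + 1) * H))
      = P * P * Q * Q * ((x - 1) * (x + 2) * H) + 2 * P * Q * (x - P) * (x - Q) * H"
    by (simp add: algebra_simps)
  then show ?thesis
    by (simp only: mom_def if_True if_False x_def[symmetric] P_def[symmetric] Q_def[symmetric] F3 F G S V)
qed

context haarM
begin

lemma int4'[simp, intro]: "integrable \<mu> (\<lambda>U. (U a b * U a b) * (U c d * U c d))"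
  using int4[of a b a b c d c d] by (simp add: mult.assoc)

lemma gS_int[simp, intro]: "integrable \<mu> (gS p q)"
proof (rule haar_integrable[OF haar, where B="real p * real q"])
  show "gS p q \<in> borel_measurable borel" unfolding gS_def by simp
  fix U assume "Defs.orthogonal_mat m U" then show "\<bar>gS p q U\<bar> \<le> real p * real q"
    using gS_bounds[of m U p q] by simp
qed

lemma gS2_int[simp, intro]: "integrable \<mu> (\<lambda>U. (gS p q U)^2)"
proof (rule haar_integrable[OF haar, where B="(real p * real q)^2"])
  show "(\<lambda>U. (gS p q U)^2) \<in> borel_measurable borel" unfolding gS_def by simp
  fix U assume "Defs.orthogonal_mat m U" then show "\<bar>(gS p q U)^2\<bar> \<le> (real p * real q)^2"
    using gS_bounds[of m U p q] by (simp add: power_mono)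
qed

lemma gS_mean:
  assumes "p \<le> m" "q \<le> m"
  shows "(\<integral>U. gS p q U \<partial>\<mu>) = real p * real q / real m"
proof -
  have "(\<integral>U. gS p q U \<partial>\<mu>) = (\<Sum>l<p. \<Sum>l'<q. (\<integral>U. (U l l')^2 \<partial>\<mu>))"
    unfolding gS_def by (simp add: power2_eq_square)
  also have "\<dots> = (\<Sum>l<p. \<Sum>l'<q. 1 / real m)"
    using assms by (intro sum.cong refl e2) auto
  finally show ?thesis by simp
qed

lemma gS_sq:
  assumes "2 \<le> m" "p \<le> m" "q \<le> m"
  shows "(\<integral>U. (gS p q U)^2 \<partial>\<mu>) = (real p * real q / real m)^2 + vY m p q"
proof -
  have pw: "(gS p q U)^2 = (\<Sum>l1<p. \<Sum>l2<p. \<Sum>c1<q. \<Sum>c2<q. (U l1 c1 * U l1 c1) * (U l2 c2 * U l2 c2))" for U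
    unfolding gS_def power2_eq_square by (simp only: sum_product)
  have "(\<integral>U. (gS p q U)^2 \<partial>\<mu>) = (\<Sum>l1<p. \<Sum>l2<p. \<Sum>c1<q. \<Sum>c2<q. M4 l1 c1 l2 c2)"
    unfolding pw M4_def by (simp add: Bochner_Integration.integral_sum integrable_sum del: mult.assoc) (simp add: mult.assoc)
  also have "\<dots> = (\<Sum>l1<p. \<Sum>l2<p. \<Sum>c1<q. \<Sum>c2<q. mom m (l1 = l2) (c1 = c2))"
    using assms by (intro sum.cong refl moments) auto
  also have "\<dots> = (\<Sum>l1<p. \<Sum>l2<p. real q * mom m (l1 = l2) True + real q * (real q - 1) * mom m (l1 = l2) False)"
    by (simp add: dsum_mom)
  also have "\<dots> = (\<Sum>l1<p. \<Sum>l2<p. (if l1 = l2 then real q * mom m True True + real q * (real q - 1) * mom m True False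
       else real q * mom m False True + real q * (real q - 1) * mom m False False))"
    by (intro sum.cong refl) auto
  also have "\<dots> = (real p * real q / real m)^2 + vY m p q"
    by (simp only: dsum_if mom_poly[OF assms(1)])
  finally show ?thesis .
qed

end



context haarM
begin

lemma gS_cvar:
  assumes "2 \<le> m" "p \<le> m" "q \<le> m"
  shows "(\<integral>U. (gS p q U - real p * real q / real m)^2 \<partial>\<mu>) = vY m p q"
proof -
  let ?c = "real p * real q / real m"
  have "(\<integral>U. (gS p q U - ?c)^2 \<partial>\<mu>) = (\<integral>U. (gS p q U)^2 - 2 * ?c * gS p q U + ?c^2 \<partial>\<mu>)"
    by (simp add: power2_diff mult_ac)
  also have "\<dots> = (\<integral>U. (gS p q U)^2 \<partial>\<mu>) - 2 * ?c * (\<integral>U. gS p q U \<partial>\<mu>) + ?c^2"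
    by (simp add: prob_space)
  also have "\<dots> = vY m p q" using gS_sq[OF assms] gS_mean[OF assms(2,3)] by (simp add: power2_eq_square)
  finally show ?thesis .
qed

lemma gS_cmean:
  assumes "p \<le> m" "q \<le> m"
  shows "(\<integral>U. (gS p q U - real p * real q / real m) \<partial>\<mu>) = 0"
  using gS_mean[OF assms] by (simp add: prob_space)

end

lemma haar_Y:
  fixes f :: "real \<Rightarrow> real"
  assumes h: "haar_orthogonal m \<mu>" and W: "Defs.orthogonal_mat m W" and pq: "p \<le> m" "q \<le> m"
    and f: "f \<in> borel_measurable borel"
  shows "(\<integral>U. f (Yf m p q U W) \<partial>\<mu>) = (\<integral>S. f (gS p q S) \<partial>(distr \<mu> borel (\<lambda>U. mmult m U (transp m W))))"
proof -
  have gm: "(\<lambda>S. f (gS p q S)) \<in> borel_measurable borel" unfolding gS_def using f by simp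
  show ?thesis
    using integral_distr[OF haar_meas[OF h meas_mmult_r] gm] Y_eq_g[OF pq] by simp
qed

lemma Y_cmean:
  assumes h: "haar_orthogonal m \<mu>" and W: "Defs.orthogonal_mat m W" and pq: "p \<le> m" "q \<le> m"
  shows "(\<integral>U. Yf m p q U W - real p * real q / real m \<partial>\<mu>) = 0"
proof -
  interpret nu: haarM m "distr \<mu> borel (\<lambda>U. mmult m U (transp m W))"
    by unfold_locales (rule haar_right[OF h ortho_transp[OF W]])
  show ?thesis using haar_Y[OF h W pq, of "\<lambda>y. y - real p * real q / real m"] nu.gS_cmean[OF pq] by simp
qed

lemma Y_cvar:
  assumes h: "haar_orthogonal m \<mu>" and W: "Defs.orthogonal_mat m W" and pq: "p \<le> m" "q \<le> m" and m2: "2 \<le> m"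
  shows "(\<integral>U. (Yf m p q U W - real p * real q / real m)^2 \<partial>\<mu>) = vY m p q"
proof -
  interpret nu: haarM m "distr \<mu> borel (\<lambda>U. mmult m U (transp m W))"
    by unfold_locales (rule haar_right[OF h ortho_transp[OF W]])
  show ?thesis using haar_Y[OF h W pq, of "\<lambda>y. (y - real p * real q / real m)^2"] nu.gS_cvar[OF m2 pq] by simp
qed

lemma meas_Yf[measurable]:
  assumes [measurable]: "f \<in> measurable N borel" "g \<in> measurable N borel"
  shows "(\<lambda>x. Yf m p q (f x) (g x)) \<in> borel_measurable N"
  unfolding Yf_def by measurable




locale pset = prob_space M for M :: "'a measure" +
  fixes k m :: nat and ps :: "nat \<Rightarrow> nat" and Om :: "nat \<Rightarrow> 'a \<Rightarrow> (nat \<Rightarrow> nat \<Rightarrow> real)"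
  assumes indep: "indep_vars (\<lambda>_. borel) Om {..<k}"
    and haarO: "\<And>i. i < k \<Longrightarrow> haar_orthogonal m (distr M borel (Om i))"
    and psm: "\<And>i. i < k \<Longrightarrow> ps i \<le> m"
begin

lemma measO: "i < k \<Longrightarrow> Om i \<in> measurable M borel"
  using indep unfolding indep_vars_def by auto

lemma AE_orth1: "i < k \<Longrightarrow> AE \<omega> in M. Defs.orthogonal_mat m (Om i \<omega>)"
  using haar_AE_ortho[OF haarO, of i] AE_distr_iff[OF measO, of i "Defs.orthogonal_mat m"] sets_ortho[of m]
  by (simp add: Collect_conv_if)

lemma AE_orth: "AE \<omega> in M. \<forall>i<k. Defs.orthogonal_mat m (Om i \<omega>)"
proof -
  have "AE \<omega> in M. \<forall>i\<in>{..<k}. Defs.orthogonal_mat m (Om i \<omega>)"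
    by (rule AE_finite_allI) (auto intro: AE_orth1)
  then show ?thesis by (rule eventually_mono) auto
qed

lemma intout:
  fixes F :: "((nat \<Rightarrow> nat \<Rightarrow> nat \<Rightarrow> real) \<times> (nat \<Rightarrow> nat \<Rightarrow> real)) \<Rightarrow> real"
  assumes u: "u < k" and v: "v < k" "v \<noteq> u"
    and Fm: "F \<in> borel_measurable (PiM ({..<k} - {u}) (\<lambda>_. borel) \<Otimes>\<^sub>M borel)"
    and Fi: "integrable M (\<lambda>\<omega>. F (restrict (\<lambda>i. Om i \<omega>) ({..<k} - {u}), Om u \<omega>))"
    and inner: "\<And>r. Defs.orthogonal_mat m (r v) \<Longrightarrow> (\<integral>w. F (r, w) \<partial>(distr M borel (Om u))) = c"
  shows "(\<integral>\<omega>. F (restrict (\<lambda>i. Om i \<omega>) ({..<k} - {u}), Om u \<omega>) \<partial>M) = c"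
proof -
  define B where "B = {..<k} - {u}"
  define R where "R = (\<lambda>\<omega>. restrict (\<lambda>i. Om i \<omega>) B)"
  define S where "S = (\<lambda>\<omega>. restrict (\<lambda>i. Om i \<omega>) {u})"
  define F' where "F' = (\<lambda>(r, w::nat \<Rightarrow> nat \<Rightarrow> nat \<Rightarrow> real). F (r, w u))"
  have vB: "v \<in> B" using v unfolding B_def by auto
  have i1: "indep_var (PiM B (\<lambda>_. borel)) R (PiM {u} (\<lambda>_. borel)) S"
    unfolding R_def S_def using indep_var_restrict[OF indep, of B "{u}"] u unfolding B_def by auto
  then have rvR: "R \<in> measurable M (PiM B (\<lambda>_. borel))" and rvS: "S \<in> measurable M (PiM {u} (\<lambda>_. borel))"
    and deq: "distr M (PiM B (\<lambda>_. borel)) R \<Otimes>\<^sub>M distr M (PiM {u} (\<lambda>_. borel)) S = distr M (PiM B (\<lambda>_. borel) \<Otimes>\<^sub>M PiM {u} (\<lambda>_. borel)) (\<lambda>x. (R x, S x))"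
    unfolding indep_var_distribution_eq by auto
  define L where "L = distr M (PiM B (\<lambda>_. borel)) R"
  define U where "U = distr M (PiM {u} (\<lambda>_. borel)) S"
  interpret L: prob_space L unfolding L_def by (rule prob_space_distr[OF rvR])
  interpret U: prob_space U unfolding U_def by (rule prob_space_distr[OF rvS])
  interpret LU: pair_sigma_finite L U ..
  have pm: "(\<lambda>x. (R x, S x)) \<in> measurable M (PiM B (\<lambda>_. borel) \<Otimes>\<^sub>M PiM {u} (\<lambda>_. borel))"
    using rvR rvS by (rule measurable_Pair)
  have Fm': "F \<in> borel_measurable (PiM B (\<lambda>_. borel) \<Otimes>\<^sub>M borel)" using Fm unfolding B_def .
  have cu: "(\<lambda>w::nat \<Rightarrow> nat \<Rightarrow> nat \<Rightarrow> real. w u) \<in> measurable (PiM {u} (\<lambda>_. borel)) borel"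
    by (rule measurable_component_singleton) simp
  have F'm: "F' \<in> borel_measurable (PiM B (\<lambda>_. borel) \<Otimes>\<^sub>M PiM {u} (\<lambda>_. borel))"
  proof -
    have "(\<lambda>(r, w::nat \<Rightarrow> nat \<Rightarrow> nat \<Rightarrow> real). (r, w u)) \<in> measurable (PiM B (\<lambda>_. borel) \<Otimes>\<^sub>M PiM {u} (\<lambda>_. borel)) (PiM B (\<lambda>_. borel) \<Otimes>\<^sub>M borel)"
      using cu by (auto intro!: measurable_Pair simp: split_beta')
    from measurable_comp[OF this Fm'] show ?thesis unfolding F'_def by (simp add: comp_def split_beta')
  qed
  have SU: "S \<omega> u = Om u \<omega>" for \<omega> unfolding S_def by simp
  have "(\<integral>\<omega>. F (R \<omega>, Om u \<omega>) \<partial>M) = (\<integral>\<omega>. F' (R \<omega>, S \<omega>) \<partial>M)" unfolding F'_def by (simp add: SU)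
  also have "\<dots> = integral\<^sup>L (distr M (PiM B (\<lambda>_. borel) \<Otimes>\<^sub>M PiM {u} (\<lambda>_. borel)) (\<lambda>x. (R x, S x))) F'"
    by (rule integral_distr[OF pm F'm, symmetric])
  also have "\<dots> = integral\<^sup>L (L \<Otimes>\<^sub>M U) F'" unfolding L_def U_def deq ..
  also have "\<dots> = (\<integral>r. (\<integral>w. F' (r, w) \<partial>U) \<partial>L)"
  proof (rule LU.integral_fst'[symmetric])
    have "integrable (distr M (PiM B (\<lambda>_. borel) \<Otimes>\<^sub>M PiM {u} (\<lambda>_. borel)) (\<lambda>x. (R x, S x))) F'"
      using integrable_distr_eq[OF pm F'm] Fi unfolding R_def B_def F'_def by (simp add: SU)
    then show "integrable (L \<Otimes>\<^sub>M U) F'" unfolding L_def U_def deq .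
  qed
  also have "\<dots> = (\<integral>r. c \<partial>L)"
  proof (rule integral_cong_AE)
    have sL: "sets (L \<Otimes>\<^sub>M U) = sets (PiM B (\<lambda>_. borel) \<Otimes>\<^sub>M PiM {u} (\<lambda>_. borel))" unfolding L_def U_def by simp
    have "F' \<in> borel_measurable (L \<Otimes>\<^sub>M U)"
      using F'm measurable_cong_sets[OF sL refl, of borel] by blast
    then have "case_prod (\<lambda>r w. F' (r, w)) \<in> borel_measurable (L \<Otimes>\<^sub>M U)"
      by (simp add: case_prod_eta)
    then show "(\<lambda>r. \<integral>w. F' (r, w) \<partial>U) \<in> borel_measurable L"
      by (rule U.borel_measurable_lebesgue_integral)
    show "(\<lambda>r. c) \<in> borel_measurable L" by simp
    have pv: "{x \<in> space (PiM B (\<lambda>_. borel)). Defs.orthogonal_mat m (x v)} \<in> sets (PiM B (\<lambda>_. borel))"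
    proof -
      have "(\<lambda>x. x v) \<in> measurable (PiM B (\<lambda>_. borel)) (borel :: (nat \<Rightarrow> nat \<Rightarrow> real) measure)"
        using measurable_component_singleton[OF vB] .
      then have "Measurable.pred (PiM B (\<lambda>_. borel)) (\<lambda>x. Defs.orthogonal_mat m (x v))"
        using measurable_compose[OF _ pred_ortho] by blast
      then show ?thesis by (simp add: pred_def)
    qed
    have "AE \<omega> in M. Defs.orthogonal_mat m (R \<omega> v)"
      using AE_orth1[OF v(1)] vB unfolding R_def by simp
    then have "AE r in L. Defs.orthogonal_mat m (r v)"
      unfolding L_def by (subst AE_distr_iff[OF rvR pv])
    then show "AE r in L. (\<integral>w. F' (r, w) \<partial>U) = c"
      using AE_space[of L]
    proof eventually_elim
      case (elim r)
      have rs: "r \<in> space (PiM B (\<lambda>_. borel))" using elim(2) unfolding L_def by simp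
      have Fr: "(\<lambda>x. F (r, x)) \<in> borel_measurable borel"
        using measurable_Pair2[OF Fm' rs] by simp
      have "(\<integral>w. F' (r, w) \<partial>U) = (\<integral>\<omega>. F (r, S \<omega> u) \<partial>M)"
        unfolding U_def F'_def using integral_distr[OF rvS, of "\<lambda>w. F (r, w u)"] measurable_comp[OF cu Fr]
        by (simp add: comp_def)
      also have "\<dots> = (\<integral>x. F (r, x) \<partial>(distr M borel (Om u)))"
        unfolding SU using integral_distr[OF measO[OF u] Fr] by simp
      also have "\<dots> = c" using inner elim(1) by simp
      finally show ?case .
    qed
  qed
  also have "\<dots> = c" by (simp add: L.prob_space)
  finally show ?thesis unfolding R_def B_def .
qed

end




lemma cc_le: "real p * real q / real m \<le> real p * real q"
proof (cases "m = 0")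
  case False
  then have "real m \<ge> 1" by simp
  have "0 \<le> real p * real q" by simp
  then have "real p * real q / real m \<le> real p * real q / 1"
    using \<open>real m \<ge> 1\<close> by (intro divide_left_mono) auto
  then show ?thesis by simp
qed simp

lemma Z_bound:
  assumes "Defs.orthogonal_mat m U" "Defs.orthogonal_mat m W" "p \<le> m" "q \<le> m"
  shows "\<bar>Yf m p q U W - real p * real q / real m\<bar> \<le> 2 * real p * real q"
proof -
  have c0: "0 \<le> real p * real q / real m" by simp
  have "0 \<le> real p * real q" by simp
  then show ?thesis using Y_bounds[OF assms] cc_le[of p q m] c0 unfolding abs_le_iff by linarith
qed

lemma meas_fst_comp:
  assumes "v \<in> B"
  shows "(\<lambda>x. fst x v) \<in> measurable (PiM B (\<lambda>_. borel) \<Otimes>\<^sub>M N) (borel :: (nat \<Rightarrow> nat \<Rightarrow> real) measure)"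
  using measurable_comp[OF measurable_fst measurable_component_singleton[OF assms]] by (simp add: comp_def)

context pset
begin

definition cc where "cc i j = real (ps i) * real (ps j) / real m"
definition Z where "Z i j \<omega> = Yf m (ps i) (ps j) (Om i \<omega>) (Om j \<omega>) - cc i j"

lemma Z_sym: "Z i j \<omega> = Z j i \<omega>"
  unfolding Z_def cc_def by (subst Y_sym) (simp add: mult.commute)

lemma Z_meas: "i < k \<Longrightarrow> j < k \<Longrightarrow> Z i j \<in> borel_measurable M"
  unfolding Z_def using measO[of i] measO[of j] by measurable

lemma AE_Zb: "i < k \<Longrightarrow> j < k \<Longrightarrow> AE \<omega> in M. \<bar>Z i j \<omega>\<bar> \<le> 2 * real (ps i) * real (ps j)"
  using AE_orth by (rule eventually_mono) (auto simp: Z_def cc_def intro!: Z_bound psm)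

lemma Z_int: "i < k \<Longrightarrow> j < k \<Longrightarrow> integrable M (Z i j)"
  by (rule integrable_const_bound[OF _ Z_meas]) (use AE_Zb in auto)

lemma ZZ_int: "i < k \<Longrightarrow> j < k \<Longrightarrow> a < k \<Longrightarrow> b < k \<Longrightarrow> integrable M (\<lambda>\<omega>. Z i j \<omega> * Z a b \<omega>)"
proof (rule integrable_const_bound[where B="(2 * real (ps i) * real (ps j)) * (2 * real (ps a) * real (ps b))"])
  assume l: "i < k" "j < k" "a < k" "b < k"
  show "AE \<omega> in M. norm (Z i j \<omega> * Z a b \<omega>) \<le> (2 * real (ps i) * real (ps j)) * (2 * real (ps a) * real (ps b))"
    using AE_Zb[OF l(1,2)] AE_Zb[OF l(3,4)]
  proof eventually_elim
    case (elim \<omega>)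
    have "\<bar>Z i j \<omega>\<bar> * \<bar>Z a b \<omega>\<bar> \<le> (2 * real (ps i) * real (ps j)) * (2 * real (ps a) * real (ps b))"
      by (rule mult_mono) (use elim in auto)
    then show ?case by (simp add: abs_mult)
  qed
  show "(\<lambda>\<omega>. Z i j \<omega> * Z a b \<omega>) \<in> borel_measurable M" using Z_meas l by simp
qed

lemma Z_mean:
  assumes "i < k" "j < k" "i \<noteq> j"
  shows "(\<integral>\<omega>. Z i j \<omega> \<partial>M) = 0"
proof -
  define B where "B = {..<k} - {i}"
  have jB: "j \<in> B" using assms unfolding B_def by auto
  define F where "F = (\<lambda>(r :: nat \<Rightarrow> nat \<Rightarrow> nat \<Rightarrow> real, w). Yf m (ps i) (ps j) w (r j) - cc i j)"
  have eq: "(\<lambda>\<omega>. F (restrict (\<lambda>i. Om i \<omega>) B, Om i \<omega>)) = Z i j"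
    using jB unfolding F_def Z_def by (intro ext) simp
  have Fm: "F \<in> borel_measurable (PiM B (\<lambda>_. borel) \<Otimes>\<^sub>M borel)"
  proof -
    have "(\<lambda>x. Yf m (ps i) (ps j) (snd x) (fst x j)) \<in> borel_measurable (PiM B (\<lambda>_. borel) \<Otimes>\<^sub>M borel)"
      by (rule meas_Yf[OF measurable_snd meas_fst_comp[OF jB]])
    then have "(\<lambda>x. Yf m (ps i) (ps j) (snd x) (fst x j) - cc i j) \<in> borel_measurable (PiM B (\<lambda>_. borel) \<Otimes>\<^sub>M borel)"
      by (rule borel_measurable_diff) simp
    moreover have "F = (\<lambda>x. Yf m (ps i) (ps j) (snd x) (fst x j) - cc i j)" unfolding F_def by (simp add: fun_eq_iff)
    ultimately show ?thesis by (simp only:)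
  qed
  have "(\<integral>\<omega>. F (restrict (\<lambda>i. Om i \<omega>) B, Om i \<omega>) \<partial>M) = 0"
    unfolding B_def
  proof (rule intout[OF assms(1) assms(2) assms(3)[symmetric]])
    show "F \<in> borel_measurable (PiM ({..<k} - {i}) (\<lambda>_. borel) \<Otimes>\<^sub>M borel)" using Fm unfolding B_def .
    show "integrable M (\<lambda>\<omega>. F (restrict (\<lambda>i. Om i \<omega>) ({..<k} - {i}), Om i \<omega>))"
      using eq Z_int[OF assms(1,2)] unfolding B_def by simp
    fix r :: "nat \<Rightarrow> nat \<Rightarrow> nat \<Rightarrow> real" assume "Defs.orthogonal_mat m (r j)"
    then show "(\<integral>w. F (r, w) \<partial>distr M borel (Om i)) = 0"
      unfolding F_def cc_def using Y_cmean[OF haarO[OF assms(1)] _ psm[OF assms(1)] psm[OF assms(2)]] by simp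
  qed
  then show ?thesis using eq by simp
qed


lemma Gm:
  assumes "j \<in> B"
  shows "(\<lambda>x. Yf m (ps i) (ps j) (snd x) (fst x j) - cc i j) \<in> borel_measurable (PiM B (\<lambda>_. borel) \<Otimes>\<^sub>M borel)"
proof -
  have "(\<lambda>x. Yf m (ps i) (ps j) (snd x) (fst x j)) \<in> borel_measurable (PiM B (\<lambda>_. borel) \<Otimes>\<^sub>M borel)"
    by (rule meas_Yf[OF measurable_snd meas_fst_comp[OF assms]])
  then show ?thesis by (rule borel_measurable_diff) (rule borel_measurable_const)
qed

lemma Km:
  assumes "a \<in> B" "b \<in> B"
  shows "(\<lambda>x::(nat \<Rightarrow> nat \<Rightarrow> nat \<Rightarrow> real) \<times> (nat \<Rightarrow> nat \<Rightarrow> real). Yf m (ps a) (ps b) (fst x a) (fst x b) - cc a b) \<in> borel_measurable (PiM B (\<lambda>_. borel) \<Otimes>\<^sub>M borel)"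
proof -
  have "(\<lambda>x::(nat \<Rightarrow> nat \<Rightarrow> nat \<Rightarrow> real) \<times> (nat \<Rightarrow> nat \<Rightarrow> real). Yf m (ps a) (ps b) (fst x a) (fst x b)) \<in> borel_measurable (PiM B (\<lambda>_. borel) \<Otimes>\<^sub>M borel)"
    by (rule meas_Yf[OF meas_fst_comp[OF assms(1)] meas_fst_comp[OF assms(2)]])
  then show ?thesis by (rule borel_measurable_diff) (rule borel_measurable_const)
qed

lemma Z_sq:
  assumes "i < k" "j < k" "i \<noteq> j" "2 \<le> m"
  shows "(\<integral>\<omega>. Z i j \<omega> * Z i j \<omega> \<partial>M) = vY m (ps i) (ps j)"
proof -
  define B where "B = {..<k} - {i}"
  have jB: "j \<in> B" using assms unfolding B_def by auto
  define G where "G = (\<lambda>x::(nat \<Rightarrow> nat \<Rightarrow> nat \<Rightarrow> real) \<times> (nat \<Rightarrow> nat \<Rightarrow> real). Yf m (ps i) (ps j) (snd x) (fst x j) - cc i j)"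
  define F where "F = (\<lambda>x. G x * G x)"
  have eq: "(\<lambda>\<omega>. F (restrict (\<lambda>i. Om i \<omega>) B, Om i \<omega>)) = (\<lambda>\<omega>. Z i j \<omega> * Z i j \<omega>)"
    using jB unfolding F_def G_def Z_def by (intro ext) simp
  have Fm: "F \<in> borel_measurable (PiM B (\<lambda>_. borel) \<Otimes>\<^sub>M borel)"
    unfolding F_def G_def by (rule borel_measurable_times[OF Gm[OF jB] Gm[OF jB]])
  have "(\<integral>\<omega>. F (restrict (\<lambda>i. Om i \<omega>) B, Om i \<omega>) \<partial>M) = vY m (ps i) (ps j)"
    unfolding B_def
  proof (rule intout[OF assms(1) assms(2) assms(3)[symmetric]])
    show "F \<in> borel_measurable (PiM ({..<k} - {i}) (\<lambda>_. borel) \<Otimes>\<^sub>M borel)" using Fm unfolding B_def .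
    show "integrable M (\<lambda>\<omega>. F (restrict (\<lambda>i. Om i \<omega>) ({..<k} - {i}), Om i \<omega>))"
      using eq ZZ_int[OF assms(1,2,1,2)] unfolding B_def by simp
    fix r :: "nat \<Rightarrow> nat \<Rightarrow> nat \<Rightarrow> real" assume "Defs.orthogonal_mat m (r j)"
    then show "(\<integral>w. F (r, w) \<partial>distr M borel (Om i)) = vY m (ps i) (ps j)"
      unfolding F_def G_def cc_def using Y_cvar[OF haarO[OF assms(1)] _ psm[OF assms(1)] psm[OF assms(2)] assms(4)]
      by (simp add: power2_eq_square)
  qed
  then show ?thesis using eq by simp
qed

lemma Z_cross:
  assumes "i < k" "j < k" "i \<noteq> j" "a < k" "b < k" "a \<noteq> i" "b \<noteq> i"
  shows "(\<integral>\<omega>. Z i j \<omega> * Z a b \<omega> \<partial>M) = 0"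
proof -
  define B where "B = {..<k} - {i}"
  have jB: "j \<in> B" "a \<in> B" "b \<in> B" using assms unfolding B_def by auto
  define G where "G = (\<lambda>x::(nat \<Rightarrow> nat \<Rightarrow> nat \<Rightarrow> real) \<times> (nat \<Rightarrow> nat \<Rightarrow> real). Yf m (ps i) (ps j) (snd x) (fst x j) - cc i j)"
  define K where "K = (\<lambda>x::(nat \<Rightarrow> nat \<Rightarrow> nat \<Rightarrow> real) \<times> (nat \<Rightarrow> nat \<Rightarrow> real). Yf m (ps a) (ps b) (fst x a) (fst x b) - cc a b)"
  define F where "F = (\<lambda>x. G x * K x)"
  have eq: "(\<lambda>\<omega>. F (restrict (\<lambda>i. Om i \<omega>) B, Om i \<omega>)) = (\<lambda>\<omega>. Z i j \<omega> * Z a b \<omega>)"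
    using jB unfolding F_def G_def K_def Z_def by (intro ext) simp
  have Fm: "F \<in> borel_measurable (PiM B (\<lambda>_. borel) \<Otimes>\<^sub>M borel)"
    unfolding F_def G_def K_def by (rule borel_measurable_times[OF Gm[OF jB(1)] Km[OF jB(2,3)]])
  have "(\<integral>\<omega>. F (restrict (\<lambda>i. Om i \<omega>) B, Om i \<omega>) \<partial>M) = 0"
    unfolding B_def
  proof (rule intout[OF assms(1) assms(2) assms(3)[symmetric]])
    show "F \<in> borel_measurable (PiM ({..<k} - {i}) (\<lambda>_. borel) \<Otimes>\<^sub>M borel)" using Fm unfolding B_def .
    show "integrable M (\<lambda>\<omega>. F (restrict (\<lambda>i. Om i \<omega>) ({..<k} - {i}), Om i \<omega>))"
      using eq ZZ_int[OF assms(1,2,4,5)] unfolding B_def by simp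
    fix r :: "nat \<Rightarrow> nat \<Rightarrow> nat \<Rightarrow> real" assume o: "Defs.orthogonal_mat m (r j)"
    have "(\<integral>w. F (r, w) \<partial>distr M borel (Om i)) = (\<integral>w. (Yf m (ps i) (ps j) w (r j) - cc i j) \<partial>distr M borel (Om i)) * K (r, undefined)"
      unfolding F_def G_def K_def by simp
    also have "(\<integral>w. (Yf m (ps i) (ps j) w (r j) - cc i j) \<partial>distr M borel (Om i)) = 0"
      unfolding cc_def using Y_cmean[OF haarO[OF assms(1)] o psm[OF assms(1)] psm[OF assms(2)]] by simp
    finally show "(\<integral>w. F (r, w) \<partial>distr M borel (Om i)) = 0" by simp
  qed
  then show ?thesis using eq by simp
qed

definition W where "W i j \<omega> = (if i = j then 0 else Z i j \<omega>)"

lemma EWW: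
  assumes "i < k" "j < k" "a < k" "b < k" "2 \<le> m"
  shows "(\<integral>\<omega>. W i j \<omega> * W a b \<omega> \<partial>M) = (if i \<noteq> j \<and> ((a = i \<and> b = j) \<or> (a = j \<and> b = i)) then vY m (ps i) (ps j) else 0)"
proof (cases "i = j \<or> a = b")
  case True then show ?thesis unfolding W_def by auto
next
  case False
  then have ij: "i \<noteq> j" and ab: "a \<noteq> b" by auto
  show ?thesis
  proof (cases "(a = i \<and> b = j) \<or> (a = j \<and> b = i)")
    case True
    then have "Z a b = Z i j" using Z_sym by (auto simp: fun_eq_iff)
    then show ?thesis using True ij ab Z_sq[OF assms(1,2) ij assms(5)] unfolding W_def by simp
  next
    case nt: False
    show ?thesis
    proof (cases "a \<noteq> i \<and> b \<noteq> i")
      case True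
      then show ?thesis using nt ij ab Z_cross[OF assms(1,2) ij assms(3,4)] unfolding W_def by simp
    next
      case False
      then have "a \<noteq> j \<and> b \<noteq> j" using nt ab ij by auto
      then have "(\<integral>\<omega>. Z j i \<omega> * Z a b \<omega> \<partial>M) = 0" using Z_cross[OF assms(2,1) ij[symmetric] assms(3,4)] by simp
      moreover have "Z j i = Z i j" using Z_sym by (auto simp: fun_eq_iff)
      ultimately show ?thesis using nt ij ab unfolding W_def by auto
    qed
  qed
qed

end




lemma int_sum2:
  fixes f :: "_ \<Rightarrow> _ \<Rightarrow> _ \<Rightarrow> real"
  assumes "\<And>i j. i \<in> A \<Longrightarrow> j \<in> B \<Longrightarrow> integrable M (f i j)"
  shows "(\<integral>x. (\<Sum>i\<in>A. \<Sum>j\<in>B. f i j x) \<partial>M) = (\<Sum>i\<in>A. \<Sum>j\<in>B. (\<integral>x. f i j x \<partial>M))"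
proof -
  have "(\<integral>x. (\<Sum>i\<in>A. \<Sum>j\<in>B. f i j x) \<partial>M) = (\<Sum>i\<in>A. (\<integral>x. (\<Sum>j\<in>B. f i j x) \<partial>M))"
    by (rule Bochner_Integration.integral_sum) (use assms in \<open>auto intro!: integrable_sum\<close>)
  also have "\<dots> = (\<Sum>i\<in>A. \<Sum>j\<in>B. (\<integral>x. f i j x \<partial>M))"
    by (intro sum.cong refl Bochner_Integration.integral_sum) (use assms in auto)
  finally show ?thesis .
qed

context pset
begin

definition CC where "CC = (\<Sum>i<k. \<Sum>j<k. (if i = j then real (ps i) else cc i j))"

lemma W_int: "i < k \<Longrightarrow> j < k \<Longrightarrow> integrable M (W i j)"
  unfolding W_def by (cases "i = j") (auto intro: Z_int)

lemma WW_int: "i < k \<Longrightarrow> j < k \<Longrightarrow> a < k \<Longrightarrow> b < k \<Longrightarrow> integrable M (\<lambda>\<omega>. W i j \<omega> * W a b \<omega>)"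
  unfolding W_def by (cases "i = j"; cases "a = b") (auto intro: ZZ_int)

lemma W_mean: "i < k \<Longrightarrow> j < k \<Longrightarrow> (\<integral>\<omega>. W i j \<omega> \<partial>M) = 0"
  unfolding W_def by (cases "i = j") (auto intro: Z_mean)

lemma T_eq: "trace_sq m (Qmat k m ps (\<lambda>i. Om i \<omega>)) = (\<Sum>i<k. \<Sum>j<k. Yf m (ps i) (ps j) (Om i \<omega>) (Om j \<omega>))"
  by (rule trace_Y) (auto intro: psm)

lemma T_AE: "AE \<omega> in M. trace_sq m (Qmat k m ps (\<lambda>i. Om i \<omega>)) = CC + (\<Sum>i<k. \<Sum>j<k. W i j \<omega>)"
  using AE_orth
proof eventually_elim
  case (elim \<omega>)
  have "trace_sq m (Qmat k m ps (\<lambda>i. Om i \<omega>)) = (\<Sum>i<k. \<Sum>j<k. (if i = j then real (ps i) else cc i j) + W i j \<omega>)"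
    unfolding T_eq
  proof (intro sum.cong refl)
    fix i j assume "i \<in> {..<k}" "j \<in> {..<k}"
    then show "Yf m (ps i) (ps j) (Om i \<omega>) (Om j \<omega>) = (if i = j then real (ps i) else cc i j) + W i j \<omega>"
      using elim Y_diag[of m "Om i \<omega>" "ps i"] psm[of i] unfolding W_def Z_def by auto
  qed
  also have "\<dots> = CC + (\<Sum>i<k. \<Sum>j<k. W i j \<omega>)" unfolding CC_def by (simp add: sum.distrib)
  finally show ?case .
qed

lemma T_mean: "(\<integral>\<omega>. trace_sq m (Qmat k m ps (\<lambda>i. Om i \<omega>)) \<partial>M) = CC"
proof -
  have "(\<integral>\<omega>. trace_sq m (Qmat k m ps (\<lambda>i. Om i \<omega>)) \<partial>M) = (\<integral>\<omega>. CC + (\<Sum>i<k. \<Sum>j<k. W i j \<omega>) \<partial>M)"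
  proof (rule integral_cong_AE)
    show "AE \<omega> in M. trace_sq m (Qmat k m ps (\<lambda>i. Om i \<omega>)) = CC + (\<Sum>i<k. \<Sum>j<k. W i j \<omega>)" by (rule T_AE)
    show "(\<lambda>\<omega>. trace_sq m (Qmat k m ps (\<lambda>i. Om i \<omega>))) \<in> borel_measurable M"
      unfolding T_eq by (intro borel_measurable_sum) (auto intro: meas_Yf measO)
    show "(\<lambda>\<omega>. CC + (\<Sum>i<k. \<Sum>j<k. W i j \<omega>)) \<in> borel_measurable M"
      using W_int by (intro borel_measurable_add borel_measurable_const borel_measurable_sum) auto
  qed
  also have "\<dots> = (\<integral>\<omega>. CC \<partial>M) + (\<integral>\<omega>. (\<Sum>i<k. \<Sum>j<k. W i j \<omega>) \<partial>M)"
    by (rule Bochner_Integration.integral_add) (auto intro!: integrable_sum W_int)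
  also have "(\<integral>\<omega>. (\<Sum>i<k. \<Sum>j<k. W i j \<omega>) \<partial>M) = (\<Sum>i<k. \<Sum>j<k. (\<integral>\<omega>. W i j \<omega> \<partial>M))"
    by (rule int_sum2) (auto intro: W_int)
  finally show ?thesis by (simp add: prob_space W_mean)
qed

lemma pair_sum:
  fixes v :: real
  assumes "i < k" "j < k"
  shows "(\<Sum>a<k. \<Sum>b<k. (if i \<noteq> j \<and> ((a = i \<and> b = j) \<or> (a = j \<and> b = i)) then v else 0)) = (if i \<noteq> j then 2 * v else 0)"
proof (cases "i = j")
  case False
  have "(\<Sum>a<k. \<Sum>b<k. (if i \<noteq> j \<and> ((a = i \<and> b = j) \<or> (a = j \<and> b = i)) then v else 0))
      = (\<Sum>a<k. (if a = i then v else 0) + (if a = j then v else 0))"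
  proof (rule sum.cong[OF refl])
    fix a assume "a \<in> {..<k}"
    show "(\<Sum>b<k. (if i \<noteq> j \<and> ((a = i \<and> b = j) \<or> (a = j \<and> b = i)) then v else 0)) = (if a = i then v else 0) + (if a = j then v else 0)"
      using False assms by (cases "a = i"; cases "a = j") (auto simp: sum.delta)
  qed
  also have "\<dots> = 2 * v" using assms False by (simp add: sum.distrib)
  finally show ?thesis using False by simp
qed simp

lemma T_var:
  assumes "2 \<le> m"
  shows "variance (\<lambda>\<omega>. trace_sq m (Qmat k m ps (\<lambda>i. Om i \<omega>))) = (\<Sum>i<k. \<Sum>j<k. (if i \<noteq> j then 2 * vY m (ps i) (ps j) else 0))"
proof -
  have "variance (\<lambda>\<omega>. trace_sq m (Qmat k m ps (\<lambda>i. Om i \<omega>))) = (\<integral>\<omega>. (trace_sq m (Qmat k m ps (\<lambda>i. Om i \<omega>)) - CC)^2 \<partial>M)"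
    by (simp add: T_mean)
  also have "\<dots> = (\<integral>\<omega>. (\<Sum>i<k. \<Sum>j<k. \<Sum>a<k. \<Sum>b<k. W i j \<omega> * W a b \<omega>) \<partial>M)"
  proof (rule integral_cong_AE)
    show "AE \<omega> in M. (trace_sq m (Qmat k m ps (\<lambda>i. Om i \<omega>)) - CC)^2 = (\<Sum>i<k. \<Sum>j<k. \<Sum>a<k. \<Sum>b<k. W i j \<omega> * W a b \<omega>)"
      using T_AE
    proof eventually_elim
      case (elim \<omega>)
      have "(\<Sum>i<k. \<Sum>j<k. W i j \<omega>)^2 = (\<Sum>i<k. \<Sum>j<k. \<Sum>a<k. \<Sum>b<k. W i j \<omega> * W a b \<omega>)"
        by (simp only: power2_eq_square sum_distrib_right) (simp only: sum_distrib_left)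
      then show ?case using elim by simp
    qed
    show "(\<lambda>\<omega>. (trace_sq m (Qmat k m ps (\<lambda>i. Om i \<omega>)) - CC)^2) \<in> borel_measurable M"
      unfolding T_eq by (intro borel_measurable_power borel_measurable_diff borel_measurable_const borel_measurable_sum) (auto intro: meas_Yf measO)
    show "(\<lambda>\<omega>. \<Sum>i<k. \<Sum>j<k. \<Sum>a<k. \<Sum>b<k. W i j \<omega> * W a b \<omega>) \<in> borel_measurable M"
      using WW_int by (intro borel_measurable_sum) auto
  qed
  also have "\<dots> = (\<Sum>i<k. \<Sum>j<k. \<Sum>a<k. \<Sum>b<k. (\<integral>\<omega>. W i j \<omega> * W a b \<omega> \<partial>M))"
  proof -
    have "(\<integral>\<omega>. (\<Sum>i<k. \<Sum>j<k. \<Sum>a<k. \<Sum>b<k. W i j \<omega> * W a b \<omega>) \<partial>M) = (\<Sum>i<k. \<Sum>j<k. (\<integral>\<omega>. (\<Sum>a<k. \<Sum>b<k. W i j \<omega> * W a b \<omega>) \<partial>M))"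
      by (rule int_sum2) (auto intro!: integrable_sum WW_int)
    also have "\<dots> = (\<Sum>i<k. \<Sum>j<k. \<Sum>a<k. \<Sum>b<k. (\<integral>\<omega>. W i j \<omega> * W a b \<omega> \<partial>M))"
      by (intro sum.cong refl int_sum2) (auto intro!: WW_int)
    finally show ?thesis .
  qed
  also have "\<dots> = (\<Sum>i<k. \<Sum>j<k. \<Sum>a<k. \<Sum>b<k. (if i \<noteq> j \<and> ((a = i \<and> b = j) \<or> (a = j \<and> b = i)) then vY m (ps i) (ps j) else 0))"
    using assms by (intro sum.cong refl EWW) auto
  also have "\<dots> = (\<Sum>i<k. \<Sum>j<k. (if i \<noteq> j then 2 * vY m (ps i) (ps j) else 0))"
    by (intro sum.cong refl pair_sum) auto
  finally show ?thesis .
qed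

end




lemma pair_bound:
  assumes m2: "2 \<le> m" and pq: "p \<le> m" "q \<le> m"
  shows "\<bar>2 * vY m p q - 4 * (real p * real q * (real m - real p) * (real m - real q) / (real m)^4)\<bar> \<le> 4 / real m"
proof -
  define x where "x = real m"
  define X where "X = real p * real q * (real m - real p) * (real m - real q)"
  have x2: "x \<ge> 2" using m2 unfolding x_def by simp
  have a: "0 \<le> real p" "real p \<le> x" "0 \<le> real q" "real q \<le> x" using pq unfolding x_def by auto
  have b: "0 \<le> x - real p" "x - real p \<le> x" "0 \<le> x - real q" "x - real q \<le> x" using a by auto
  have X0: "0 \<le> X" unfolding X_def x_def[symmetric] using a b by simp
  have X1: "X \<le> x * x * x * x" unfolding X_def x_def[symmetric]
    using a b by (intro mult_mono) (auto intro: mult_nonneg_nonneg)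
  define H where "H = 1 / (x^4 * (x - 1) * (x + 2))"
  have dpos: "x^4 * (x - 1) * (x + 2) > 0" using x2 by simp
  have H0: "H > 0" unfolding H_def using dpos by simp
  have e1: "2 * vY m p q = 4 * X * (x * x) * H"
  proof -
    have "2 * vY m p q = 4 * X / (x^2 * (x - 1) * (x + 2))"
      unfolding vY_def X_def x_def by (simp add: algebra_simps)
    also have "\<dots> = 4 * X * (x * x) / (x^4 * (x - 1) * (x + 2))"
      using x2 by (simp add: power2_eq_square power4_eq_xxxx)
    finally show ?thesis unfolding H_def by simp
  qed
  have e2: "4 * (X / x^4) = 4 * X * ((x - 1) * (x + 2)) * H"
    unfolding H_def using x2 by (simp add: power4_eq_xxxx)
  have diff: "4 * (X / x^4) - 2 * vY m p q = 4 * X * (x - 2) * H"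
    unfolding e1 e2 by (simp add: algebra_simps)
  have d0: "0 \<le> 4 * X * (x - 2) * H" using X0 x2 H0 by simp
  have "4 * X * (x - 2) * H \<le> 4 * (x * x * x * x) * (x - 2) * H"
    using X1 x2 H0 by (intro mult_right_mono) auto
  also have "\<dots> = 4 * (x - 2) / ((x - 1) * (x + 2))"
    unfolding H_def using x2 by (simp add: power4_eq_xxxx)
  also have "\<dots> \<le> 4 / x"
    using x2 by (simp add: divide_simps) (simp add: algebra_simps)
  finally have "4 * X * (x - 2) * H \<le> 4 / x" .
  moreover have "0 \<le> 4 / x" using x2 by simp
  ultimately have "\<bar>2 * vY m p q - 4 * (X / x^4)\<bar> \<le> 4 / x" using diff d0 unfolding abs_le_iff by linarith
  then show ?thesis unfolding X_def x_def .
qed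


lemma sum_if_split:
  fixes a :: real and k i :: nat
  assumes "i < k"
  shows "(\<Sum>j<k. (if i = j then a else X j)) = a + (\<Sum>j<k. (if i \<noteq> j then X j else 0))"
proof -
  have "(\<Sum>j<k. (if i = j then a else X j)) = (\<Sum>j<k. (if i = j then a else 0) + (if i \<noteq> j then X j else 0))"
    by (intro sum.cong refl) auto
  also have "\<dots> = a + (\<Sum>j<k. (if i \<noteq> j then X j else 0))"
  proof -
    have "(\<Sum>j<k. (if i = j then a else 0)) = a" using assms by (subst sum.delta') auto
    then show ?thesis by (simp add: sum.distrib)
  qed
  finally show ?thesis .
qed

theorem lemma1:
  fixes M :: "'a measure" and k :: nat and p :: "nat \<Rightarrow> nat \<Rightarrow> nat" and y :: "nat \<Rightarrow> real"
    and Om :: "nat \<Rightarrow> nat \<Rightarrow> 'a \<Rightarrow> (nat \<Rightarrow> nat \<Rightarrow> real)"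
  assumes "prob_space M"
    and "k \<ge> 2"
    and "\<forall>n. \<forall>i<k. 0 < p n i"
    and "\<forall>i<k. ((\<lambda>n. real (p n i) / real n) \<longlongrightarrow> y i) sequentially"
    and "\<forall>i<k. 0 < y i \<and> y i < 1"
    and "\<forall>n. \<forall>i<k. Om n i \<in> measurable M borel"
    and "\<forall>n. prob_space.indep_vars M (\<lambda>_. borel) (Om n) {..<k}"
    and "\<forall>n. \<forall>i<k. haar_orthogonal (n - 1) (distr M borel (Om n i))"
  shows "(\<forall>n. (\<forall>i<k. p n i \<le> n - 1) \<longrightarrow>
            prob_space.expectation M (\<lambda>\<omega>. trace_sq (n - 1) (Qmat k (n - 1) (p n) (\<lambda>i. Om n i \<omega>)))
            = real (\<Sum>i<k. p n i)
              + (\<Sum>i<k. \<Sum>j<k. if i \<noteq> j then real (p n i) * real (p n j) / (real n - 1) else 0))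
       \<and> (\<lambda>n. prob_space.variance M (\<lambda>\<omega>. trace_sq (n - 1) (Qmat k (n - 1) (p n) (\<lambda>i. Om n i \<omega>)))
              - 4 * (\<Sum>i<k. \<Sum>j<k. if i \<noteq> j then
                    real (p n i) * real (p n j) * (real n - 1 - real (p n i)) * (real n - 1 - real (p n j))
                    / (real n - 1) ^ 4 else 0))
         \<in> O(\<lambda>n. 1 / real n)"
proof -
  have mk: "pset M k (n - 1) (p n) (Om n)" if "\<forall>i<k. p n i \<le> n - 1" for n
    unfolding pset_def pset_axioms_def using assms(1,7,8) that by auto
  have k0: "0 < k" using assms(2) by simp
  have n2: "2 \<le> n" if "\<forall>i<k. p n i \<le> n - 1" for n
    using that[rule_format, OF k0] assms(3)[rule_format, of 0 n, OF k0] by simp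
  have part1: "\<forall>n. (\<forall>i<k. p n i \<le> n - 1) \<longrightarrow>
            prob_space.expectation M (\<lambda>\<omega>. trace_sq (n - 1) (Qmat k (n - 1) (p n) (\<lambda>i. Om n i \<omega>)))
            = real (\<Sum>i<k. p n i)
              + (\<Sum>i<k. \<Sum>j<k. if i \<noteq> j then real (p n i) * real (p n j) / (real n - 1) else 0)"
  proof (intro allI impI)
    fix n assume h: "\<forall>i<k. p n i \<le> n - 1"
    interpret P: pset M k "n - 1" "p n" "Om n" by (rule mk[OF h])
    have rn: "real (n - 1) = real n - 1" using n2[OF h] by (simp add: of_nat_diff)
    have "prob_space.expectation M (\<lambda>\<omega>. trace_sq (n - 1) (Qmat k (n - 1) (p n) (\<lambda>i. Om n i \<omega>))) = P.CC"
      by (rule P.T_mean)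
    also have "P.CC = (\<Sum>i<k. real (p n i) + (\<Sum>j<k. if i \<noteq> j then real (p n i) * real (p n j) / (real n - 1) else 0))"
      unfolding P.CC_def P.cc_def rn by (intro sum.cong refl sum_if_split) auto
    also have "\<dots> = real (\<Sum>i<k. p n i) + (\<Sum>i<k. \<Sum>j<k. if i \<noteq> j then real (p n i) * real (p n j) / (real n - 1) else 0)"
      by (simp add: sum.distrib)
    finally show "prob_space.expectation M (\<lambda>\<omega>. trace_sq (n - 1) (Qmat k (n - 1) (p n) (\<lambda>i. Om n i \<omega>)))
            = real (\<Sum>i<k. p n i) + (\<Sum>i<k. \<Sum>j<k. if i \<noteq> j then real (p n i) * real (p n j) / (real n - 1) else 0)" .
  qed
  have ev1: "eventually (\<lambda>n. \<forall>i\<in>{..<k}. real (p n i) / real n < 1) sequentially"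
  proof (rule eventually_ball_finite)
    show "\<forall>i\<in>{..<k}. eventually (\<lambda>n. real (p n i) / real n < 1) sequentially"
      using assms(4,5) by (auto intro: order_tendstoD(2))
  qed simp
  have ev: "eventually (\<lambda>n. 3 \<le> n \<and> (\<forall>i<k. p n i \<le> n - 1)) sequentially"
    using ev1 eventually_ge_at_top[of 3]
  proof eventually_elim
    case (elim n)
    have "\<forall>i<k. p n i \<le> n - 1"
    proof (intro allI impI)
      fix i assume "i < k"
      then have "real (p n i) / real n < 1" using elim by auto
      then have "real (p n i) < real n" using elim(2) by (simp add: divide_less_eq)
      then show "p n i \<le> n - 1" by simp
    qed
    then show ?case using elim by simp
  qed
  have part2: "(\<lambda>n. prob_space.variance M (\<lambda>\<omega>. trace_sq (n - 1) (Qmat k (n - 1) (p n) (\<lambda>i. Om n i \<omega>)))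
              - 4 * (\<Sum>i<k. \<Sum>j<k. if i \<noteq> j then
                    real (p n i) * real (p n j) * (real n - 1 - real (p n i)) * (real n - 1 - real (p n j))
                    / (real n - 1) ^ 4 else 0))
         \<in> O(\<lambda>n. 1 / real n)"
  proof (rule bigoI[where c = "8 * real k * real k"])
    show "eventually (\<lambda>n. norm (prob_space.variance M (\<lambda>\<omega>. trace_sq (n - 1) (Qmat k (n - 1) (p n) (\<lambda>i. Om n i \<omega>)))
              - 4 * (\<Sum>i<k. \<Sum>j<k. if i \<noteq> j then
                    real (p n i) * real (p n j) * (real n - 1 - real (p n i)) * (real n - 1 - real (p n j))
                    / (real n - 1) ^ 4 else 0)) \<le> 8 * real k * real k * norm (1 / real n)) sequentially"
      using ev
    proof eventually_elim
      case (elim n)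
      then have h: "\<forall>i<k. p n i \<le> n - 1" and n3: "3 \<le> n" by auto
      interpret P: pset M k "n - 1" "p n" "Om n" by (rule mk[OF h])
      define m where "m = n - 1"
      have m2: "2 \<le> m" using n3 unfolding m_def by simp
      have rn: "real n - 1 = real m" unfolding m_def using n3 by (simp add: of_nat_diff)
      define b where "b = (\<lambda>i j. real (p n i) * real (p n j) * (real m - real (p n i)) * (real m - real (p n j)) / (real m) ^ 4)"
      have var: "prob_space.variance M (\<lambda>\<omega>. trace_sq (n - 1) (Qmat k (n - 1) (p n) (\<lambda>i. Om n i \<omega>)))
          = (\<Sum>i<k. \<Sum>j<k. (if i \<noteq> j then 2 * vY m (p n i) (p n j) else 0))"
        unfolding m_def by (rule P.T_var) (use m2 in \<open>simp add: m_def\<close>)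
      have "prob_space.variance M (\<lambda>\<omega>. trace_sq (n - 1) (Qmat k (n - 1) (p n) (\<lambda>i. Om n i \<omega>)))
              - 4 * (\<Sum>i<k. \<Sum>j<k. if i \<noteq> j then
                    real (p n i) * real (p n j) * (real n - 1 - real (p n i)) * (real n - 1 - real (p n j))
                    / (real n - 1) ^ 4 else 0)
          = (\<Sum>i<k. \<Sum>j<k. (if i \<noteq> j then 2 * vY m (p n i) (p n j) - 4 * b i j else 0))"
        unfolding var rn b_def by (simp add: sum_distrib_left sum_subtractf[symmetric] if_distrib cong: if_cong)
      also have "\<bar>\<dots>\<bar> \<le> (\<Sum>i<k. \<Sum>j<k. 4 / real m)"
      proof -
        have "\<bar>\<Sum>i<k. \<Sum>j<k. (if i \<noteq> j then 2 * vY m (p n i) (p n j) - 4 * b i j else 0)\<bar>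
            \<le> (\<Sum>i<k. \<bar>\<Sum>j<k. (if i \<noteq> j then 2 * vY m (p n i) (p n j) - 4 * b i j else 0)\<bar>)"
          by (rule sum_abs)
        also have "\<dots> \<le> (\<Sum>i<k. \<Sum>j<k. \<bar>(if i \<noteq> j then 2 * vY m (p n i) (p n j) - 4 * b i j else 0)\<bar>)"
          by (intro sum_mono sum_abs)
        also have "\<dots> \<le> (\<Sum>i<k. \<Sum>j<k. 4 / real m)"
        proof (intro sum_mono)
          fix i j assume "i \<in> {..<k}" "j \<in> {..<k}"
          then have "p n i \<le> m" "p n j \<le> m" using h unfolding m_def by auto
          then show "\<bar>(if i \<noteq> j then 2 * vY m (p n i) (p n j) - 4 * b i j else 0)\<bar> \<le> 4 / real m"
            using pair_bound[OF m2, of "p n i" "p n j"] m2 unfolding b_def by auto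
        qed
        finally show ?thesis .
      qed
      also have "\<dots> = 4 * real k * real k / real m" by simp
      also have "\<dots> \<le> 8 * real k * real k * norm (1 / real n)"
      proof -
        have "real n \<le> 2 * real m" using n3 unfolding m_def by (simp add: of_nat_diff)
        moreover have "real m > 0" using m2 by simp
        ultimately have "1 / real m \<le> 2 * (1 / real n)" using n3 by (simp add: divide_simps)
        then have "4 * real k * real k * (1 / real m) \<le> 4 * real k * real k * (2 * (1 / real n))"
          by (intro mult_left_mono) auto
        then show ?thesis by simp
      qed
      finally show ?case by simp
    qed
  qed
  show ?thesis using part1 part2 by blast
qed


end
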